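(* Let $G$ be a connected Cartesian-prime graph with at least two vertices, and put $n=|V(G)|$, $m=|E(G)|$. Let $$r=\max\{\,|\beta|_e\cdot n+|\beta|\cdot m \;:\; \beta\in\mathrm{Aut}(G)\setminus\{\mathrm{id}\}\,\},$$ with $r=0$ if $\mathrm{Aut}(G)$ is trivial. Then $$\theta'(G\,\square\, G)=\max\{\,n\cdot m,\ r\,\}+1.$$
   Context: All graphs are finite and simple. $\square$ denotes the Cartesian product. A graph is (Cartesian) prime if it is not isomorphic to a Cartesian product of two graphs each with at least two vertices. For an automorphism $\beta$ (acting on edges by $\beta(uv)=\beta(u)\beta(v)$), $|\beta|$ is the number of cycles (including fixed points) of $\beta$ on $V(G)$, and $|\beta|_e$ is the number of cycles of $\beta$ on $E(G)$. An edge coloring with $k$ colors is a surjective map onto $\{1,\dots,k\}$. It is distinguishing if only the identity automorphism preserves all edge colors. $\theta'(H)$ is the least $k$ such that every edge coloring of $H$ using exactly $k$ colors is distinguishing. *)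

theory Defs
  imports Main
begin

text \<open>A finite simple graph: a pair (vertex set, edge set), edges are 2-element subsets.\<close>
type_synonym 'a graph = "'a set \<times> 'a set set"

definition verts :: "'a graph \<Rightarrow> 'a set" where "verts G = fst G"
definition edges :: "'a graph \<Rightarrow> 'a set set" where "edges G = snd G"

definition simple_graph :: "'a graph \<Rightarrow> bool" where
  "simple_graph G \<longleftrightarrow> finite (verts G) \<and>
     (\<forall>e\<in>edges G. \<exists>u v. e = {u, v} \<and> u \<noteq> v \<and> u \<in> verts G \<and> v \<in> verts G)"

definition adj :: "'a graph \<Rightarrow> 'a \<Rightarrow> 'a \<Rightarrow> bool" where
  "adj G u v \<longleftrightarrow> {u, v} \<in> edges G"

definition connected_graph :: "'a graph \<Rightarrow> bool" where
  "connected_graph G \<longleftrightarrow> (\<forall>u\<in>verts G. \<forall>v\<in>verts G. (adj G)\<^sup>*\<^sup>* u v)"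

definition cart_prod :: "'a graph \<Rightarrow> 'b graph \<Rightarrow> ('a \<times> 'b) graph" where
  "cart_prod G H = (verts G \<times> verts H,
     {{(u, x), (v, y)} | u x v y.
        (u = v \<and> u \<in> verts G \<and> {x, y} \<in> edges H) \<or>
        (x = y \<and> x \<in> verts H \<and> {u, v} \<in> edges G)})"

definition graph_iso :: "'a graph \<Rightarrow> 'b graph \<Rightarrow> bool" where
  "graph_iso G H \<longleftrightarrow> (\<exists>f. bij_betw f (verts G) (verts H) \<and>
     (\<forall>u\<in>verts G. \<forall>v\<in>verts G. {u, v} \<in> edges G \<longleftrightarrow> {f u, f v} \<in> edges H))"

text \<open>Cartesian prime. Factors are finite graphs, so w.l.o.g. their vertices are
  natural numbers (any finite graph is isomorphic to one on nat).\<close>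
definition cart_prime :: "'a graph \<Rightarrow> bool" where
  "cart_prime (G :: 'a graph) \<longleftrightarrow> \<not> (\<exists>(H1 :: nat graph) (H2 :: nat graph). simple_graph H1 \<and> simple_graph H2 \<and>
      card (verts H1) \<ge> 2 \<and> card (verts H2) \<ge> 2 \<and> graph_iso G (cart_prod H1 H2))"

text \<open>Automorphisms, represented extensionally (identity outside the vertex set).\<close>
definition auts :: "'a graph \<Rightarrow> ('a \<Rightarrow> 'a) set" where
  "auts G = {f. bij_betw f (verts G) (verts G) \<and>
     (\<forall>u\<in>verts G. \<forall>v\<in>verts G. {u, v} \<in> edges G \<longleftrightarrow> {f u, f v} \<in> edges G) \<and>
     (\<forall>x. x \<notin> verts G \<longrightarrow> f x = x)}"

text \<open>|beta|: number of cycles of beta on V(G); |beta|_e: number of cycles on E(G).\<close>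
definition vertex_cycles :: "'a graph \<Rightarrow> ('a \<Rightarrow> 'a) \<Rightarrow> nat" where
  "vertex_cycles G f = card ((\<lambda>x. {(f ^^ k) x | k. True}) ` verts G)"

definition edge_cycles :: "'a graph \<Rightarrow> ('a \<Rightarrow> 'a) \<Rightarrow> nat" where
  "edge_cycles G f = card ((\<lambda>e. {(f ^^ k) ` e | k. True}) ` edges G)"

definition distinguishing :: "'a graph \<Rightarrow> ('a set \<Rightarrow> nat) \<Rightarrow> bool" where
  "distinguishing G c \<longleftrightarrow>
     (\<forall>f\<in>auts G. (\<forall>e\<in>edges G. c (f ` e) = c e) \<longrightarrow> f = id)"

definition theta' :: "'a graph \<Rightarrow> nat" where
  "theta' G = (LEAST k. k \<ge> 1 \<and>
     (\<forall>c. c ` edges G = {1..k} \<longrightarrow> distinguishing G c))"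

end

theory Submission
  imports Defs
begin


definition orb :: "('b \<Rightarrow> 'b) \<Rightarrow> 'b \<Rightarrow> 'b set" where
  "orb h x = {(h ^^ k) x | k. True}"

lemma orb_self: "x \<in> orb h x"
  unfolding orb_def by (auto intro: exI[of _ 0])

lemma orb_funpow: "(h ^^ k) x \<in> orb h x"
  unfolding orb_def by auto

lemma orb_trans: assumes y: "y \<in> orb h x" shows "orb h y \<subseteq> orb h x"
proof
  fix z assume z: "z \<in> orb h y"
  obtain a where a: "y = (h ^^ a) x" using y unfolding orb_def by auto
  obtain b where b: "z = (h ^^ b) y" using z unfolding orb_def by auto
  have "z = (h ^^ (b + a)) x" using a b by (simp add: funpow_add)
  then show "z \<in> orb h x" using orb_funpow by metis
qed

lemma orb_closed: "h ` Z \<subseteq> Z \<Longrightarrow> x \<in> Z \<Longrightarrow> orb h x \<subseteq> Z"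
proof -
  assume a: "h ` Z \<subseteq> Z" "x \<in> Z"
  have "(h ^^ k) x \<in> Z" for k by (induction k) (use a in auto)
  thus ?thesis unfolding orb_def by auto
qed

lemma funpow_mult_fix: "(h ^^ p) x = x \<Longrightarrow> (h ^^ (p * c)) x = x"
proof (induction c)
  case 0 then show ?case by simp
next
  case (Suc c)
  have "(h ^^ (p * Suc c)) x = (h ^^ p) ((h ^^ (p * c)) x)"
    by (simp add: funpow_add)
  then show ?case using Suc by simp
qed

lemma periodic:
  assumes "bij_betw h Z Z" "finite Z" "x \<in> Z"
  shows "\<exists>p>0. (h ^^ p) x = x"
proof -
  have sub: "(\<lambda>k. (h ^^ k) x) ` {0..card Z} \<subseteq> Z"
    using bij_betw_funpow[OF assms(1)] assms(3) by (auto simp: bij_betw_def)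
  have "\<not> inj_on (\<lambda>k. (h ^^ k) x) {0..card Z}"
  proof
    assume "inj_on (\<lambda>k. (h ^^ k) x) {0..card Z}"
    then have "card ((\<lambda>k. (h ^^ k) x) ` {0..card Z}) = Suc (card Z)"
      by (simp add: card_image)
    moreover have "card ((\<lambda>k. (h ^^ k) x) ` {0..card Z}) \<le> card Z"
      using card_mono[OF assms(2) sub] .
    ultimately show False by simp
  qed
  then obtain i j where ij: "i \<noteq> j" "(h ^^ i) x = (h ^^ j) x"
    unfolding inj_on_def by auto
  then obtain i j where ij: "i < j" "(h ^^ i) x = (h ^^ j) x"
    by (metis linorder_neqE_nat)
  have e: "j = i + (j - i)" using ij by simp
  have "(h ^^ i) ((h ^^ (j - i)) x) = (h ^^ (i + (j - i))) x"
    by (simp add: funpow_add)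
  also have "\<dots> = (h ^^ i) x" using ij(2) e[symmetric] by simp
  finally have "(h ^^ i) ((h ^^ (j - i)) x) = (h ^^ i) x" .
  moreover have "inj_on (h ^^ i) Z" using bij_betw_funpow[OF assms(1)] by (auto simp: bij_betw_def)
  moreover have "(h ^^ (j - i)) x \<in> Z"
    using bij_betw_funpow[OF assms(1)] assms(3) by (auto simp: bij_betw_def)
  ultimately have "(h ^^ (j - i)) x = x" using assms(3) by (auto simp: inj_on_def)
  thus ?thesis using ij by (intro exI[of _ "j - i"]) auto
qed

lemma orb_sym:
  assumes "bij_betw h Z Z" "finite Z" "x \<in> Z" "y \<in> orb h x"
  shows "x \<in> orb h y"
proof -
  obtain p where p: "p > 0" "(h ^^ p) x = x" using periodic[OF assms(1-3)] by blast
  obtain m where m: "y = (h ^^ m) x" using assms(4) unfolding orb_def by auto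
  have "m \<le> p * m" using p(1) by simp
  hence "p * (m + 1) \<ge> m" by (simp add: algebra_simps trans_le_add2)
  then obtain k where k: "p * (m+1) = k + m" using le_Suc_ex by (metis add.commute)
  have "(h ^^ k) y = (h ^^ k) ((h ^^ m) x)" using m by simp
  also have "\<dots> = (h ^^ (k + m)) x" by (simp add: funpow_add)
  also have "\<dots> = x" using funpow_mult_fix[OF p(2), of "m+1"] k by simp
  finally have "(h ^^ k) y = x" .
  thus ?thesis unfolding orb_def by blast
qed

lemma orb_eq:
  assumes "bij_betw h Z Z" "finite Z" "x \<in> Z" "y \<in> orb h x"
  shows "orb h y = orb h x"
  using orb_trans[OF assms(4)] orb_trans[OF orb_sym[OF assms]] by (rule antisym)


lemma simple_finite: "simple_graph G \<Longrightarrow> finite (verts G)"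
  unfolding simple_graph_def by auto

lemma simple_edge: "simple_graph G \<Longrightarrow> e \<in> edges G \<Longrightarrow>
   \<exists>u v. e = {u, v} \<and> u \<noteq> v \<and> u \<in> verts G \<and> v \<in> verts G"
  unfolding simple_graph_def by auto

lemma simple_edge_sub: "simple_graph G \<Longrightarrow> e \<in> edges G \<Longrightarrow> e \<subseteq> verts G"
  using simple_edge by fastforce

lemma simple_edges_finite: "simple_graph G \<Longrightarrow> finite (edges G)"
proof -
  assume s: "simple_graph G"
  have "edges G \<subseteq> Pow (verts G)" using simple_edge_sub[OF s] by auto
  thus ?thesis using simple_finite[OF s] finite_subset by blast
qed

lemma simple_noloop: "simple_graph G \<Longrightarrow> {x, x} \<notin> edges G"
  using simple_edge by (fastforce simp: doubleton_eq_iff)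

lemma simple_pair: "simple_graph G \<Longrightarrow> {u, v} \<in> edges G \<Longrightarrow> u \<in> verts G \<and> v \<in> verts G \<and> u \<noteq> v"
  using simple_edge_sub[of G "{u,v}"] simple_noloop[of G u] by auto

lemma adj_sym: "adj G u v = adj G v u"
  unfolding adj_def by (simp add: insert_commute)

lemma verts_cart: "verts (cart_prod G1 G2) = verts G1 \<times> verts G2"
  unfolding cart_prod_def verts_def by simp

lemma cart_edge_iff:
  "{(u, x), (v, y)} \<in> edges (cart_prod G1 G2) \<longleftrightarrow>
     (u = v \<and> u \<in> verts G1 \<and> {x, y} \<in> edges G2) \<or>
     (x = y \<and> x \<in> verts G2 \<and> {u, v} \<in> edges G1)"
proof
  assume "{(u, x), (v, y)} \<in> edges (cart_prod G1 G2)"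
  then obtain u' x' v' y' where e: "{(u, x), (v, y)} = {(u', x'), (v', y')}"
     and c: "(u' = v' \<and> u' \<in> verts G1 \<and> {x', y'} \<in> edges G2) \<or>
        (x' = y' \<and> x' \<in> verts G2 \<and> {u', v'} \<in> edges G1)"
    unfolding cart_prod_def edges_def by auto
  from e have "((u,x) = (u',x') \<and> (v,y) = (v',y')) \<or> ((u,x) = (v',y') \<and> (v,y) = (u',x'))"
    by (simp add: doubleton_eq_iff)
  then show "(u = v \<and> u \<in> verts G1 \<and> {x, y} \<in> edges G2) \<or>
     (x = y \<and> x \<in> verts G2 \<and> {u, v} \<in> edges G1)"
    using c by (auto simp: insert_commute)
next
  assume "(u = v \<and> u \<in> verts G1 \<and> {x, y} \<in> edges G2) \<or>
     (x = y \<and> x \<in> verts G2 \<and> {u, v} \<in> edges G1)"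
  then show "{(u, x), (v, y)} \<in> edges (cart_prod G1 G2)"
    unfolding cart_prod_def edges_def by auto
qed

lemma cart_edge_form: "e \<in> edges (cart_prod G1 G2) \<Longrightarrow> \<exists>p q. e = {p, q}"
  unfolding cart_prod_def edges_def by auto

lemma simple_cart:
  assumes "simple_graph G1" "simple_graph G2"
  shows "simple_graph (cart_prod G1 G2)"
  unfolding simple_graph_def
proof
  show "finite (verts (cart_prod G1 G2))"
    using simple_finite[OF assms(1)] simple_finite[OF assms(2)] by (simp add: verts_cart)
  show "\<forall>e\<in>edges (cart_prod G1 G2). \<exists>u v. e = {u, v} \<and> u \<noteq> v \<and> u \<in> verts (cart_prod G1 G2) \<and> v \<in> verts (cart_prod G1 G2)"
  proof
    fix e assume e: "e \<in> edges (cart_prod G1 G2)"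
    then obtain p q where pq: "e = {p, q}" using cart_edge_form by blast
    obtain u x v y where p: "p = (u,x)" and q: "q = (v,y)" by fastforce
    have c: "(u = v \<and> u \<in> verts G1 \<and> {x, y} \<in> edges G2) \<or>
     (x = y \<and> x \<in> verts G2 \<and> {u, v} \<in> edges G1)"
      using e pq p q cart_edge_iff by metis
    have "p \<noteq> q \<and> p \<in> verts (cart_prod G1 G2) \<and> q \<in> verts (cart_prod G1 G2)"
    proof (cases "u = v \<and> u \<in> verts G1 \<and> {x, y} \<in> edges G2")
      case True
      then show ?thesis using simple_pair[OF assms(2), of x y] p q by (auto simp add: verts_cart)
    next
      case False
      then have "x = y \<and> x \<in> verts G2 \<and> {u, v} \<in> edges G1" using c by blast
      then show ?thesis using simple_pair[OF assms(1), of u v] p q by (auto simp add: verts_cart)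
    qed
    then show "\<exists>u v. e = {u, v} \<and> u \<noteq> v \<and> u \<in> verts (cart_prod G1 G2) \<and> v \<in> verts (cart_prod G1 G2)"
      using pq by blast
  qed
qed

lemma adj_verts: "simple_graph G \<Longrightarrow> adj G u v \<Longrightarrow> u \<in> verts G \<and> v \<in> verts G \<and> u \<noteq> v"
  unfolding adj_def by (rule simple_pair)

lemma aut_D: assumes "f \<in> auts G"
  shows "bij_betw f (verts G) (verts G)"
    "\<forall>u\<in>verts G. \<forall>v\<in>verts G. {u, v} \<in> edges G \<longleftrightarrow> {f u, f v} \<in> edges G"
    "\<forall>x. x \<notin> verts G \<longrightarrow> f x = x"
  using assms unfolding auts_def mem_Collect_eq by simp_all

lemma aut_bij: "f \<in> auts G \<Longrightarrow> bij_betw f (verts G) (verts G)"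
  by (rule aut_D(1))
lemma aut_in: "f \<in> auts G \<Longrightarrow> u \<in> verts G \<Longrightarrow> f u \<in> verts G"
  using aut_bij bij_betwE by metis
lemma aut_edge: "f \<in> auts G \<Longrightarrow> u \<in> verts G \<Longrightarrow> v \<in> verts G \<Longrightarrow>
   {f u, f v} \<in> edges G \<longleftrightarrow> {u, v} \<in> edges G"
  using aut_D(2) by metis
lemma aut_out: "f \<in> auts G \<Longrightarrow> x \<notin> verts G \<Longrightarrow> f x = x"
  using aut_D(3) by metis
lemma aut_inj: "f \<in> auts G \<Longrightarrow> inj_on f (verts G)"
  using aut_bij bij_betw_def by metis
lemma aut_surj: "f \<in> auts G \<Longrightarrow> f ` verts G = verts G"
  using aut_bij bij_betw_def by metis

lemma id_aut: "id \<in> auts G"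
  unfolding auts_def by auto

lemma aut_comp: assumes "f \<in> auts G" "g \<in> auts G" shows "f \<circ> g \<in> auts G"
  unfolding auts_def
proof (intro CollectI conjI ballI allI impI)
  show "bij_betw (f \<circ> g) (verts G) (verts G)" using aut_bij[OF assms(1)] aut_bij[OF assms(2)]
    by (rule bij_betw_trans[rotated])
  fix u v assume "u \<in> verts G" "v \<in> verts G"
  then show "{u, v} \<in> edges G \<longleftrightarrow> {(f \<circ> g) u, (f \<circ> g) v} \<in> edges G"
    using aut_edge[OF assms(1)] aut_edge[OF assms(2)] aut_in[OF assms(2)] by auto
next
  fix x assume "x \<notin> verts G" then show "(f \<circ> g) x = x" using aut_out[OF assms(1)] aut_out[OF assms(2)] by simp
qed

lemma aut_image_edge: "simple_graph G \<Longrightarrow> f \<in> auts G \<Longrightarrow> e \<in> edges G \<Longrightarrow> f ` e \<in> edges G"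
  using simple_edge[of G e] aut_edge[of f G] by force

lemma aut_edges_bij:
  assumes s: "simple_graph G" and f: "f \<in> auts G"
  shows "bij_betw (image f) (edges G) (edges G)"
  unfolding bij_betw_def
proof
  show "inj_on (image f) (edges G)"
    using aut_inj[OF f] simple_edge_sub[OF s] by (auto simp: inj_on_def inj_on_image_eq_iff)
  show "image f ` edges G = edges G"
  proof
    show "image f ` edges G \<subseteq> edges G" using aut_image_edge[OF s f] by auto
    show "edges G \<subseteq> image f ` edges G"
    proof
      fix e assume e: "e \<in> edges G"
      then obtain u v where uv: "e = {u,v}" "u \<in> verts G" "v \<in> verts G" using simple_edge[OF s] by blast
      obtain u' v' where "u' \<in> verts G" "v' \<in> verts G" "u = f u'" "v = f v'"
        using uv aut_surj[OF f] by (metis imageE)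
      then have "{u', v'} \<in> edges G" "e = f ` {u', v'}" using uv e aut_edge[OF f, of u' v'] by auto
      then show "e \<in> image f ` edges G" by blast
    qed
  qed
qed

lemma funpow_image: fixes f :: "'b \<Rightarrow> 'b" and e :: "'b set"
  shows "((\<lambda>e. f ` e) ^^ k) e = (f ^^ k) ` e"
  by (induction k) (simp_all add: image_comp)

lemma edge_cycles_orb: "edge_cycles G f = card (orb (image f) ` edges G)"
  unfolding edge_cycles_def orb_def by (simp add: funpow_image)

lemma vertex_cycles_orb: "vertex_cycles G f = card (orb f ` verts G)"
  unfolding vertex_cycles_def orb_def by simp


definition dist :: "'b graph \<Rightarrow> 'b \<Rightarrow> 'b \<Rightarrow> nat" where
  "dist K u v = (LEAST k. (adj K ^^ k) u v)"

lemma dist_le: "(adj K ^^ k) u v \<Longrightarrow> dist K u v \<le> k"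
  unfolding dist_def by (rule Least_le)

lemma dist_walk: "(adj K ^^ k) u v \<Longrightarrow> (adj K ^^ dist K u v) u v"
  unfolding dist_def by (rule LeastI)

lemma dist_self: "dist K u u = 0"
  using dist_le[where k=0 and K=K and u=u and v=u] by simp

lemma dist_0: "(adj K ^^ k) u v \<Longrightarrow> dist K u v = 0 \<Longrightarrow> u = v"
  using dist_walk[where K=K and k=k and u=u and v=v] by simp

lemma dist_tri:
  assumes "(adj K ^^ k1) u v" "(adj K ^^ k2) v w"
  shows "dist K u w \<le> dist K u v + dist K v w"
proof -
  have "(adj K ^^ (dist K u v + dist K v w)) u w"
    using dist_walk[OF assms(1)] dist_walk[OF assms(2)] by (auto simp: relpowp_add)
  thus ?thesis by (rule dist_le)
qed

lemma aut_walk_fwd: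
  assumes s: "simple_graph K" and f: "f \<in> auts K"
  shows "(adj K ^^ k) u w \<Longrightarrow> u \<in> verts K \<Longrightarrow> (adj K ^^ k) (f u) (f w)"
proof (induction k arbitrary: w)
  case 0 then show ?case by simp
next
  case (Suc k)
  from Suc.prems(1) obtain y where y: "(adj K ^^ k) u y" "adj K y w" by (rule relpowp_Suc_E)
  have yw: "y \<in> verts K" "w \<in> verts K" using adj_verts[OF s y(2)] by auto
  have "adj K (f y) (f w)" using y(2) aut_edge[OF f yw] unfolding adj_def by simp
  with Suc.IH[OF y(1) Suc.prems(2)] show ?case by (rule relpowp_Suc_I)
qed

lemma aut_walk_bwd:
  assumes s: "simple_graph K" and f: "f \<in> auts K"
  shows "(adj K ^^ k) (f u) (f w) \<Longrightarrow> u \<in> verts K \<Longrightarrow> w \<in> verts K \<Longrightarrow> (adj K ^^ k) u w"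
proof (induction k arbitrary: w)
  case 0 then show ?case using aut_inj[OF f] by (simp add: inj_on_def)
next
  case (Suc k)
  from Suc.prems(1) obtain y where y: "(adj K ^^ k) (f u) y" "adj K y (f w)" by (rule relpowp_Suc_E)
  have "y \<in> verts K" using adj_verts[OF s y(2)] by auto
  then obtain y' where y': "y' \<in> verts K" "y = f y'" using aut_surj[OF f] by (metis imageE)
  have "adj K y' w" using y(2) aut_edge[OF f y'(1) Suc.prems(3)] y'(2) unfolding adj_def by simp
  then show ?case using Suc.IH[OF _ Suc.prems(2) y'(1)] y(1) y'(2) by (metis relpowp_Suc_I)
qed

lemma aut_dist:
  assumes s: "simple_graph K" and f: "f \<in> auts K" and "u \<in> verts K" "w \<in> verts K"
  shows "dist K (f u) (f w) = dist K u w"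
proof -
  have "\<And>k. (adj K ^^ k) (f u) (f w) \<longleftrightarrow> (adj K ^^ k) u w"
    using aut_walk_fwd[OF s f] aut_walk_bwd[OF s f] assms(3,4) by metis
  thus ?thesis unfolding dist_def by simp
qed

locale pg =
  fixes G :: "'a graph"
  assumes simple: "simple_graph G" and conn: "connected_graph G" and two: "2 \<le> card (verts G)"
begin

abbreviation "V \<equiv> verts G"
abbreviation "E \<equiv> edges G"
abbreviation "H \<equiv> cart_prod G G"

lemma finV: "finite V" using simple_finite[OF simple] .
lemma finE: "finite E" using simple_edges_finite[OF simple] .
lemma simpleH: "simple_graph H" using simple_cart[OF simple simple] .
lemma vertsH: "verts H = V \<times> V" by (rule verts_cart)
lemma finVH: "finite (verts H)" using simple_finite[OF simpleH] .

lemma adjH_iff: "adj H (a,b) (c,d) \<longleftrightarrow> (a = c \<and> a \<in> V \<and> adj G b d) \<or> (b = d \<and> b \<in> V \<and> adj G a c)"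
  unfolding adj_def by (rule cart_edge_iff)

lemma walkH_split: "(adj H ^^ n) (a,b) (c,d) \<Longrightarrow> \<exists>i j. i + j = n \<and> (adj G ^^ i) a c \<and> (adj G ^^ j) b d"
proof (induction n arbitrary: c d)
  case 0 then show ?case by simp
next
  case (Suc n)
  from Suc.prems obtain y where y: "(adj H ^^ n) (a,b) y" "adj H y (c,d)" by (rule relpowp_Suc_E)
  obtain c' d' where yy: "y = (c', d')" by fastforce
  obtain i j where ij: "i + j = n" "(adj G ^^ i) a c'" "(adj G ^^ j) b d'" using Suc.IH y(1) yy by blast
  have "(c' = c \<and> c' \<in> V \<and> adj G d' d) \<or> (d' = d \<and> d' \<in> V \<and> adj G c' c)" using y(2) yy adjH_iff by simp
  then show ?case
  proof
    assume a: "c' = c \<and> c' \<in> V \<and> adj G d' d"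
    then have "(adj G ^^ Suc j) b d" using ij(3) by (metis relpowp_Suc_I)
    then show ?thesis using ij a by (intro exI[of _ i] exI[of _ "Suc j"]) auto
  next
    assume a: "d' = d \<and> d' \<in> V \<and> adj G c' c"
    then have "(adj G ^^ Suc i) a c" using ij(2) by (metis relpowp_Suc_I)
    then show ?thesis using ij a by (intro exI[of _ "Suc i"] exI[of _ j]) auto
  qed
qed

lemma lift1: "b \<in> V \<Longrightarrow> (adj G ^^ i) a c \<Longrightarrow> (adj H ^^ i) (a,b) (c,b)"
proof (induction i arbitrary: c)
  case 0 then show ?case by simp
next
  case (Suc i)
  from Suc.prems(2) obtain y where y: "(adj G ^^ i) a y" "adj G y c" by (rule relpowp_Suc_E)
  have "adj H (y,b) (c,b)" using y(2) Suc.prems(1) adjH_iff by simp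
  then show ?case using Suc.IH[OF Suc.prems(1) y(1)] by (metis relpowp_Suc_I)
qed

lemma lift2: "a \<in> V \<Longrightarrow> (adj G ^^ j) b d \<Longrightarrow> (adj H ^^ j) (a,b) (a,d)"
proof (induction j arbitrary: d)
  case 0 then show ?case by simp
next
  case (Suc j)
  from Suc.prems(2) obtain y where y: "(adj G ^^ j) b y" "adj G y d" by (rule relpowp_Suc_E)
  have "adj H (a,y) (a,d)" using y(2) Suc.prems(1) adjH_iff by simp
  then show ?case using Suc.IH[OF Suc.prems(1) y(1)] by (metis relpowp_Suc_I)
qed

lemma walk_comb: "a \<in> V \<Longrightarrow> c \<in> V \<Longrightarrow> b \<in> V \<Longrightarrow> (adj G ^^ i) a c \<Longrightarrow> (adj G ^^ j) b d \<Longrightarrow> (adj H ^^ (i + j)) (a,b) (c,d)"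
  using lift1[of b i a c] lift2[of c j b d] by (auto simp: relpowp_add)

lemma connG: "u \<in> V \<Longrightarrow> v \<in> V \<Longrightarrow> \<exists>k. (adj G ^^ k) u v"
  using conn unfolding connected_graph_def by (simp add: rtranclp_power)

lemma distH: assumes "a \<in> V" "b \<in> V" "c \<in> V" "d \<in> V"
  shows "dist H (a,b) (c,d) = dist G a c + dist G b d"
proof -
  obtain i where i: "(adj G ^^ i) a c" using connG assms by blast
  obtain j where j: "(adj G ^^ j) b d" using connG assms by blast
  have w: "(adj H ^^ (dist G a c + dist G b d)) (a,b) (c,d)"
    using walk_comb[OF assms(1,3,2) dist_walk[OF i] dist_walk[OF j]] .
  have le: "dist H (a,b) (c,d) \<le> dist G a c + dist G b d" using dist_le[OF w] .
  obtain i' j' where ij: "i' + j' = dist H (a,b) (c,d)" "(adj G ^^ i') a c" "(adj G ^^ j') b d"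
    using walkH_split[OF dist_walk[OF w]] by blast
  have "dist G a c + dist G b d \<le> dist H (a,b) (c,d)"
    using dist_le[OF ij(2)] dist_le[OF ij(3)] ij(1) by simp
  with le show ?thesis by simp
qed

lemma connH: "p \<in> verts H \<Longrightarrow> q \<in> verts H \<Longrightarrow> \<exists>k. (adj H ^^ k) p q"
proof -
  assume "p \<in> verts H" "q \<in> verts H"
  then obtain a b c d where abcd: "p = (a,b)" "q = (c,d)" "a \<in> V" "b \<in> V" "c \<in> V" "d \<in> V"
    by (auto simp: vertsH)
  obtain i where i: "(adj G ^^ i) a c" using connG abcd by blast
  obtain j where j: "(adj G ^^ j) b d" using connG abcd by blast
  show ?thesis using walk_comb[OF abcd(3,5,4) i j] abcd by blast
qed

end

definition induced :: "'b graph \<Rightarrow> 'b set \<Rightarrow> 'b graph" where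
  "induced K X = (X, {e \<in> edges K. e \<subseteq> X})"
definition map_graph :: "('b \<Rightarrow> 'c) \<Rightarrow> 'b graph \<Rightarrow> 'c graph" where
  "map_graph f K = (f ` verts K, image f ` edges K)"

lemma mg_verts: "verts (map_graph f (induced K X)) = f ` X"
  unfolding map_graph_def induced_def verts_def by simp
lemma mg_edges: "edges (map_graph f (induced K X)) = image f ` {e \<in> edges K. e \<subseteq> X}"
  unfolding map_graph_def induced_def verts_def edges_def by simp

lemma mg_simple:
  assumes s: "simple_graph K" and X: "X \<subseteq> verts K" and inj: "inj_on f X"
  shows "simple_graph (map_graph f (induced K X))"
  unfolding simple_graph_def
proof (intro conjI ballI)
  show "finite (verts (map_graph f (induced K X)))"
    using simple_finite[OF s] X finite_subset by (auto simp: mg_verts)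
  fix e assume "e \<in> edges (map_graph f (induced K X))"
  then obtain e' where e': "e' \<in> edges K" "e' \<subseteq> X" "e = f ` e'" by (auto simp: mg_edges)
  then obtain u v where uv: "e' = {u,v}" "u \<noteq> v" using simple_edge[OF s] by blast
  have "f u \<noteq> f v" using uv e'(2) inj by (auto simp: inj_on_def)
  then show "\<exists>u v. e = {u, v} \<and> u \<noteq> v \<and> u \<in> verts (map_graph f (induced K X)) \<and> v \<in> verts (map_graph f (induced K X))"
    using uv e' by (intro exI[of _ "f u"] exI[of _ "f v"]) (auto simp: mg_verts)
qed

lemma mg_edge:
  assumes s: "simple_graph K" and inj: "inj_on f X" and u: "u \<in> X" and v: "v \<in> X"
  shows "{f u, f v} \<in> edges (map_graph f (induced K X)) \<longleftrightarrow> {u,v} \<in> edges K"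
proof
  assume "{f u, f v} \<in> edges (map_graph f (induced K X))"
  then obtain e where e: "e \<in> edges K" "e \<subseteq> X" "{f u, f v} = f ` e" by (auto simp: mg_edges)
  have "f ` e = f ` {u, v}" using e(3) by simp
  moreover have "{u,v} \<subseteq> X" using u v by simp
  ultimately have "e = {u,v}" using inj_on_image_eq_iff[OF inj e(2)] by blast
  then show "{u,v} \<in> edges K" using e(1) by simp
next
  assume "{u,v} \<in> edges K"
  then show "{f u, f v} \<in> edges (map_graph f (induced K X))"
    using u v unfolding mg_edges by (intro image_eqI[of _ _ "{u,v}"]) auto
qed

context pg begin

definition LG :: "'a \<Rightarrow> ('a \<times> 'a) set" where "LG b = V \<times> {b}"
definition LH :: "'a \<Rightarrow> ('a \<times> 'a) set" where "LH a = {a} \<times> V"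

lemma layer_convex:
  assumes "a \<in> V" "a' \<in> V" "c \<in> V" "e \<in> V" "b \<in> V"
    and d: "dist H (a,b) (c,e) + dist H (c,e) (a',b) = dist H (a,b) (a',b)"
  shows "e = b"
proof -
  have d2: "dist G a c + dist G b e + (dist G c a' + dist G e b) = dist G a a'"
    using d distH[OF assms(1) assms(5) assms(3) assms(4)] distH[OF assms(3) assms(4) assms(2) assms(5)]
      distH[OF assms(1) assms(5) assms(2) assms(5)] by (simp add: dist_self)
  obtain k1 where k1: "(adj G ^^ k1) a c" using connG assms by blast
  obtain k2 where k2: "(adj G ^^ k2) c a'" using connG assms by blast
  have "dist G a a' \<le> dist G a c + dist G c a'" using dist_tri[OF k1 k2] .
  then have "dist G e b = 0" using d2 by simp
  moreover obtain k3 where k3: "(adj G ^^ k3) e b" using connG assms by blast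
  ultimately show ?thesis using dist_0 by metis
qed

lemma aut_H_facts: assumes "\<psi> \<in> auts H"
  shows "inj_on \<psi> (V \<times> V)" "\<psi> ` (V \<times> V) = V \<times> V"
  using aut_inj[OF assms] aut_surj[OF assms] by (simp_all add: vertsH)

lemma image_convex:
  assumes psi: "\<psi> \<in> auts H" and b: "b \<in> V"
    and p1: "p1 \<in> \<psi> ` LG b" and p2: "p2 \<in> \<psi> ` LG b" and z: "z \<in> V \<times> V"
    and d: "dist H p1 z + dist H z p2 = dist H p1 p2"
  shows "z \<in> \<psi> ` LG b"
proof -
  from p1 obtain q1 where q1: "q1 \<in> LG b" "p1 = \<psi> q1" by (rule imageE)
  from p2 obtain q2 where q2: "q2 \<in> LG b" "p2 = \<psi> q2" by (rule imageE)
  have zz: "z \<in> \<psi> ` (V \<times> V)" using z aut_H_facts(2)[OF psi] by simp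
  from zz obtain q where q: "q \<in> V \<times> V" "z = \<psi> q" by (rule imageE)
  define a where "a = fst q1"
  define a' where "a' = fst q2"
  define c where "c = fst q"
  define e where "e = snd q"
  have a: "a \<in> V" "p1 = \<psi> (a,b)" using q1 unfolding a_def LG_def by auto
  have a': "a' \<in> V" "p2 = \<psi> (a',b)" using q2 unfolding a'_def LG_def by auto
  have ce: "c \<in> V" "e \<in> V" "z = \<psi> (c,e)" using q unfolding c_def e_def by auto
  have inV: "(a,b) \<in> verts H" "(a',b) \<in> verts H" "(c,e) \<in> verts H"
    using a a' ce b by (auto simp: vertsH)
  have "dist H p1 z = dist H (a,b) (c,e)" using aut_dist[OF simpleH psi inV(1) inV(3)] a(2) ce(3) by simp
  moreover have "dist H z p2 = dist H (c,e) (a',b)" using aut_dist[OF simpleH psi inV(3) inV(2)] a'(2) ce(3) by simp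
  moreover have "dist H p1 p2 = dist H (a,b) (a',b)" using aut_dist[OF simpleH psi inV(1) inV(2)] a(2) a'(2) by simp
  ultimately have "dist H (a,b) (c,e) + dist H (c,e) (a',b) = dist H (a,b) (a',b)"
    using d by simp
  then have "e = b" using layer_convex[OF a(1) a'(1) ce(1) ce(2) b] by simp
  then show ?thesis using ce by (auto simp: LG_def)
qed

lemma box:
  assumes psi: "\<psi> \<in> auts H" and b: "b \<in> V"
    and p1: "(x,y) \<in> \<psi> ` LG b" and p2: "(x',y') \<in> \<psi> ` LG b"
  shows "(x,y') \<in> \<psi> ` LG b"
proof -
  have sub: "\<psi> ` LG b \<subseteq> V \<times> V" using aut_H_facts(2)[OF psi] b by (auto simp: LG_def)
  have V: "x \<in> V" "y \<in> V" "x' \<in> V" "y' \<in> V" using sub p1 p2 by auto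
  have "dist H (x,y) (x,y') + dist H (x,y') (x',y') = dist H (x,y) (x',y')"
    using V by (simp add: distH dist_self)
  then show ?thesis using image_convex[OF psi b p1 p2] V by simp
qed

lemma box_eq:
  assumes psi: "\<psi> \<in> auts H" and b: "b \<in> V"
  shows "\<psi> ` LG b = fst ` (\<psi> ` LG b) \<times> snd ` (\<psi> ` LG b)"
proof
  show "\<psi> ` LG b \<subseteq> fst ` (\<psi> ` LG b) \<times> snd ` (\<psi> ` LG b)"
    by (rule subset_fst_snd)
  show "fst ` (\<psi> ` LG b) \<times> snd ` (\<psi> ` LG b) \<subseteq> \<psi> ` LG b"
  proof
    fix p assume "p \<in> fst ` (\<psi> ` LG b) \<times> snd ` (\<psi> ` LG b)"
    then have "fst p \<in> fst ` (\<psi> ` LG b)" "snd p \<in> snd ` (\<psi> ` LG b)" by auto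
    then obtain q1 q2 where q0: "q1 \<in> \<psi> ` LG b" "fst p = fst q1" "q2 \<in> \<psi> ` LG b" "snd p = snd q2"
      by (meson imageE)
    then have q: "q1 \<in> \<psi> ` LG b" "q2 \<in> \<psi> ` LG b" "p = (fst q1, snd q2)" by (auto simp: prod_eq_iff)
    show "p \<in> \<psi> ` LG b" using box[OF psi b, of "fst q1" "snd q1" "fst q2" "snd q2"] q by simp
  qed
qed

lemma not_prime_of_box:
  assumes psi: "\<psi> \<in> auts H" and b: "b \<in> V"
    and S: "\<psi> ` LG b = X \<times> Y" and XV: "X \<subseteq> V" and YV: "Y \<subseteq> V"
    and cX: "card X \<ge> 2" and cY: "card Y \<ge> 2"
  shows "\<not> cart_prime G"
proof -
  have fX: "finite X" using finite_subset[OF XV finV] .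
  have fY: "finite Y" using finite_subset[OF YV finV] .
  obtain f1 :: "'a \<Rightarrow> nat" where f1: "bij_betw f1 X {0..<card X}" using ex_bij_betw_finite_nat[OF fX] by blast
  obtain f2 :: "'a \<Rightarrow> nat" where f2: "bij_betw f2 Y {0..<card Y}" using ex_bij_betw_finite_nat[OF fY] by blast
  have i1: "inj_on f1 X" and i2: "inj_on f2 Y" using f1 f2 by (auto simp: bij_betw_def)
  define G1 where "G1 = map_graph f1 (induced G X)"
  define G2 where "G2 = map_graph f2 (induced G Y)"
  have s1: "simple_graph G1" unfolding G1_def using mg_simple[OF simple XV i1] .
  have s2: "simple_graph G2" unfolding G2_def using mg_simple[OF simple YV i2] .
  have c1: "card (verts G1) \<ge> 2" unfolding G1_def mg_verts using cX card_image[OF i1] by simp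
  have c2: "card (verts G2) \<ge> 2" unfolding G2_def mg_verts using cY card_image[OF i2] by simp
  define F where "F = map_prod f1 f2 \<circ> \<psi> \<circ> (\<lambda>a. (a,b))"
  have bij1: "bij_betw (\<lambda>a. (a,b)) V (LG b)" unfolding LG_def bij_betw_def inj_on_def by auto
  have bij2: "bij_betw \<psi> (LG b) (X \<times> Y)"
  proof -
    have "LG b \<subseteq> V \<times> V" using b by (auto simp: LG_def)
    then have "inj_on \<psi> (LG b)" by (rule inj_on_subset[OF aut_H_facts(1)[OF psi]])
    thus ?thesis using S by (simp add: bij_betw_def)
  qed
  have bij3: "bij_betw (map_prod f1 f2) (X \<times> Y) (f1 ` X \<times> f2 ` Y)"
    using bij_betw_map_prod[of f1 X "f1 ` X" f2 Y "f2 ` Y"] i1 i2 by (simp add: bij_betw_def)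
  have bijF: "bij_betw F V (verts (cart_prod G1 G2))"
    unfolding F_def verts_cart G1_def G2_def mg_verts
    using bij_betw_trans[OF bij_betw_trans[OF bij1 bij2] bij3] by (simp add: comp_assoc)
  have edgeF: "{u, v} \<in> E \<longleftrightarrow> {F u, F v} \<in> edges (cart_prod G1 G2)" if uv: "u \<in> V" "v \<in> V" for u v
  proof -
    have "{u, v} \<in> E \<longleftrightarrow> {(u,b),(v,b)} \<in> edges H"
      using cart_edge_iff[of u b v b G G] simple_noloop[OF simple, of b] b by auto
    also have "\<dots> \<longleftrightarrow> {\<psi> (u,b), \<psi> (v,b)} \<in> edges H"
      using aut_edge[OF psi, of "(u,b)" "(v,b)"] uv b by (simp add: vertsH)
    finally have e1: "{u, v} \<in> E \<longleftrightarrow> {\<psi> (u,b), \<psi> (v,b)} \<in> edges H" .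
    obtain x1 y1 where p1: "\<psi> (u,b) = (x1,y1)" by fastforce
    obtain x2 y2 where p2: "\<psi> (v,b) = (x2,y2)" by fastforce
    have "(u,b) \<in> LG b" "(v,b) \<in> LG b" using uv by (simp_all add: LG_def)
    then have "\<psi> (u,b) \<in> X \<times> Y" "\<psi> (v,b) \<in> X \<times> Y" using S by (metis imageI)+
    then have in1: "x1 \<in> X" "y1 \<in> Y" and in2: "x2 \<in> X" "y2 \<in> Y" using p1 p2 by auto
    have "{\<psi> (u,b), \<psi> (v,b)} \<in> edges H \<longleftrightarrow>
        (x1 = x2 \<and> x1 \<in> V \<and> {y1, y2} \<in> E) \<or> (y1 = y2 \<and> y1 \<in> V \<and> {x1, x2} \<in> E)"
      using p1 p2 cart_edge_iff by simp
    also have "\<dots> \<longleftrightarrow> (f1 x1 = f1 x2 \<and> f1 x1 \<in> verts G1 \<and> {f2 y1, f2 y2} \<in> edges G2) \<or>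
                       (f2 y1 = f2 y2 \<and> f2 y1 \<in> verts G2 \<and> {f1 x1, f1 x2} \<in> edges G1)"
      unfolding G1_def G2_def mg_verts
      using mg_edge[OF simple i1 in1(1) in2(1)] mg_edge[OF simple i2 in1(2) in2(2)]
        inj_on_eq_iff[OF i1 in1(1) in2(1)] inj_on_eq_iff[OF i2 in1(2) in2(2)] in1 in2 XV YV
      by auto
    also have "\<dots> \<longleftrightarrow> {F u, F v} \<in> edges (cart_prod G1 G2)"
      unfolding F_def using p1 p2 cart_edge_iff[of "f1 x1" "f2 y1" "f1 x2" "f2 y2" G1 G2] by simp
    finally show ?thesis using e1 by simp
  qed
  have "graph_iso G (cart_prod G1 G2)"
    unfolding graph_iso_def using bijF edgeF by blast
  then show ?thesis unfolding cart_prime_def using s1 s2 c1 c2 by blast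
qed

lemma layer_image:
  assumes prime: "cart_prime G" and psi: "\<psi> \<in> auts H" and b: "b \<in> V"
  shows "(\<exists>y\<in>V. \<psi> ` LG b = LG y) \<or> (\<exists>x\<in>V. \<psi> ` LG b = LH x)"
proof -
  define S where "S = \<psi> ` LG b"
  define X where "X = fst ` S"
  define Y where "Y = snd ` S"
  have SXY: "S = X \<times> Y" unfolding S_def X_def Y_def using box_eq[OF psi b] .
  have sub: "S \<subseteq> V \<times> V" unfolding S_def using aut_H_facts(2)[OF psi] b by (auto simp: LG_def)
  have XV: "X \<subseteq> V" and YV: "Y \<subseteq> V" using sub unfolding X_def Y_def by auto
  have fX: "finite X" using finite_subset[OF XV finV] .
  have fY: "finite Y" using finite_subset[OF YV finV] .
  have cS: "card S = card V"
  proof -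
    have "LG b \<subseteq> V \<times> V" using b by (auto simp: LG_def)
    then have "inj_on \<psi> (LG b)" by (rule inj_on_subset[OF aut_H_facts(1)[OF psi]])
    then have "card S = card (LG b)" unfolding S_def by (rule card_image)
    also have "card (LG b) = card V" unfolding LG_def by (simp add: card_cartesian_product)
    finally show ?thesis .
  qed
  have Vne: "V \<noteq> {}" using two by auto
  have "\<not> (card X \<ge> 2 \<and> card Y \<ge> 2)" using not_prime_of_box[OF psi b _ XV YV] SXY prime unfolding S_def by blast
  then have "card X \<le> Suc 0 \<or> card Y \<le> Suc 0" by linarith
  then show ?thesis
  proof
    assume "card X \<le> Suc 0"
    moreover have "X \<noteq> {}" using SXY cS two by auto
    ultimately obtain x where x: "X = {x}" using fX card_le_Suc0_iff_eq[OF fX] by blast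
    then have "card Y = card V" using cS SXY by (simp add: card_cartesian_product)
    then have "Y = V" using card_subset_eq[OF finV YV] by simp
    then have "S = LH x" using x SXY by (simp add: LH_def)
    moreover have "x \<in> V" using x XV by auto
    ultimately show ?thesis unfolding S_def by blast
  next
    assume "card Y \<le> Suc 0"
    moreover have "Y \<noteq> {}" using SXY cS two by auto
    ultimately obtain y where y: "Y = {y}" using fY card_le_Suc0_iff_eq[OF fY] by blast
    then have "card X = card V" using cS SXY by (simp add: card_cartesian_product)
    then have "X = V" using card_subset_eq[OF finV XV] by simp
    then have "S = LG y" using y SXY by (simp add: LG_def)
    moreover have "y \<in> V" using y YV by auto
    ultimately show ?thesis unfolding S_def by blast
  qed
qed

end

context pg begin

lemma two_elems: obtains b1 b2 where "b1 \<in> V" "b2 \<in> V" "b1 \<noteq> b2"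
proof -
  have "\<not> card V \<le> Suc 0" using two by simp
  then show ?thesis using that card_le_Suc0_iff_eq[OF finV] by blast
qed

lemma edgeH_G: "b \<in> V \<Longrightarrow> {(u,b),(v,b)} \<in> edges H \<longleftrightarrow> {u,v} \<in> E"
  using cart_edge_iff[of u b v b G G] simple_noloop[OF simple, of b] by auto

lemma edgeH_H: "a \<in> V \<Longrightarrow> {(a,x),(a,y)} \<in> edges H \<longleftrightarrow> {x,y} \<in> E"
  using cart_edge_iff[of a x a y G G] simple_noloop[OF simple, of a] by auto

lemma mk_aut:
  assumes "f ` V \<subseteq> V" "inj_on f V" "\<And>u v. u \<in> V \<Longrightarrow> v \<in> V \<Longrightarrow> {u,v} \<in> E \<longleftrightarrow> {f u, f v} \<in> E"
  shows "(\<lambda>x. if x \<in> V then f x else x) \<in> auts G"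
  unfolding auts_def mem_Collect_eq
proof (intro conjI ballI allI impI)
  have "f ` V = V" using endo_inj_surj[OF finV assms(1,2)] .
  then have "bij_betw f V V" using assms(2) by (simp add: bij_betw_def)
  then show "bij_betw (\<lambda>x. if x \<in> V then f x else x) V V"
    by (rule bij_betw_cong[THEN iffD1, rotated]) simp
  fix u v assume "u \<in> V" "v \<in> V"
  then show "{u, v} \<in> E \<longleftrightarrow> {if u \<in> V then f u else u, if v \<in> V then f v else v} \<in> E"
    using assms(3) by simp
qed simp

definition tau :: "'a \<times> 'a \<Rightarrow> 'a \<times> 'a" where
  "tau p = (if p \<in> V \<times> V then (snd p, fst p) else p)"

lemma tau_aut: "tau \<in> auts H"
  unfolding auts_def mem_Collect_eq
proof (intro conjI ballI allI impI)
  have "inj_on tau (V \<times> V)" unfolding inj_on_def tau_def by auto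
  moreover have "tau ` (V \<times> V) = V \<times> V"
  proof
    show "tau ` (V \<times> V) \<subseteq> V \<times> V" unfolding tau_def by auto
    show "V \<times> V \<subseteq> tau ` (V \<times> V)"
    proof
      fix p assume p: "p \<in> V \<times> V"
      then have "tau (snd p, fst p) = p" unfolding tau_def by auto
      moreover have "(snd p, fst p) \<in> V \<times> V" using p by auto
      ultimately show "p \<in> tau ` (V \<times> V)" by (metis imageI)
    qed
  qed
  ultimately show "bij_betw tau (verts H) (verts H)" by (simp add: bij_betw_def vertsH)
  fix p q assume pq: "p \<in> verts H" "q \<in> verts H"
  obtain a b c d where abcd: "p = (a,b)" "q = (c,d)" by fastforce
  have "tau p = (b,a)" "tau q = (d,c)" using pq abcd by (auto simp: tau_def vertsH)
  then show "{p, q} \<in> edges H \<longleftrightarrow> {tau p, tau q} \<in> edges H"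
    using abcd cart_edge_iff[of a b c d G G] cart_edge_iff[of b a d c G G] by auto
next
  fix x assume "x \<notin> verts H" then show "tau x = x" by (simp add: tau_def vertsH)
qed

lemma tau_LG: "a \<in> V \<Longrightarrow> tau ` LG a = LH a"
proof -
  assume a: "a \<in> V"
  have "LG a = (\<lambda>u. (u,a)) ` V" by (auto simp: LG_def)
  hence "tau ` LG a = (\<lambda>u. tau (u,a)) ` V" by (simp add: image_comp o_def)
  also have "\<dots> = (\<lambda>u. (a, u)) ` V" using a by (intro image_cong) (auto simp: tau_def)
  also have "\<dots> = LH a" unfolding LH_def by auto
  finally show ?thesis .
qed

lemma LG_LH_meet: "x \<in> V \<Longrightarrow> y \<in> V \<Longrightarrow> (x,y) \<in> LG y \<inter> LH x"
  by (simp add: LG_def LH_def)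

lemma LG_ne_LH: "LG y \<noteq> LH x"
proof
  assume eq: "LG y = LH x"
  obtain b1 b2 where b: "b1 \<in> V" "b2 \<in> V" "b1 \<noteq> b2" by (rule two_elems)
  have "(b1,y) \<in> LH x" "(b2,y) \<in> LH x" using eq b by (auto simp: LG_def)
  then show False using b by (simp add: LH_def)
qed

lemma LG_inj: "LG y \<inter> LG y' \<noteq> {} \<Longrightarrow> y = y'" by (auto simp: LG_def)
lemma LH_inj: "LH x \<inter> LH x' \<noteq> {} \<Longrightarrow> x = x'" by (auto simp: LH_def)

lemma img_disj:
  assumes psi: "\<psi> \<in> auts H" and "b \<in> V" "b' \<in> V" "b \<noteq> b'"
  shows "\<psi> ` LG b \<inter> \<psi> ` LG b' = {}"
proof -
  have "LG b \<union> LG b' \<subseteq> V \<times> V" using assms by (auto simp: LG_def)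
  then have i: "inj_on \<psi> (LG b \<union> LG b')" by (rule inj_on_subset[OF aut_H_facts(1)[OF psi]])
  have "LG b \<inter> LG b' = {}" using assms by (auto simp: LG_def)
  then show ?thesis using inj_on_image_Int[OF i, of "LG b" "LG b'"] by auto
qed

lemma img_meet:
  assumes "a \<in> V" "b \<in> V"
  shows "\<psi> (a,b) \<in> \<psi> ` LG b \<inter> \<psi> ` LH a"
  using assms by (auto simp: LG_def LH_def)

lemma LH_image:
  assumes prime: "cart_prime G" and psi: "\<psi> \<in> auts H" and a: "a \<in> V"
  shows "(\<exists>y\<in>V. \<psi> ` LH a = LG y) \<or> (\<exists>x\<in>V. \<psi> ` LH a = LH x)"
proof -
  have "\<psi> \<circ> tau \<in> auts H" using aut_comp[OF psi tau_aut] .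
  have "(\<psi> \<circ> tau) ` LG a = \<psi> ` (tau ` LG a)" by (rule image_comp[symmetric])
  then have "(\<psi> \<circ> tau) ` LG a = \<psi> ` LH a" using tau_LG[OF a] by simp
  with layer_image[OF prime \<open>\<psi> \<circ> tau \<in> auts H\<close> a] show ?thesis by simp
qed

lemma classify:
  assumes prime: "cart_prime G" and psi: "\<psi> \<in> auts H"
  shows "(\<exists>\<alpha> \<beta>. \<alpha> \<in> auts G \<and> \<beta> \<in> auts G \<and> (\<forall>a\<in>V. \<forall>b\<in>V. \<psi> (a,b) = (\<alpha> a, \<beta> b)))
         \<or> (\<forall>a\<in>V. \<exists>y\<in>V. \<psi> ` LH a = LG y)"
proof -
  obtain b1 b2 where b12: "b1 \<in> V" "b2 \<in> V" "b1 \<noteq> b2" by (rule two_elems)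
  show ?thesis
  proof (cases "\<exists>b0\<in>V. \<exists>y\<in>V. \<psi> ` LG b0 = LG y")
    case True
    then obtain b0 y0 where b0: "b0 \<in> V" "y0 \<in> V" "\<psi> ` LG b0 = LG y0" by blast
    have c1: "\<exists>y\<in>V. \<psi> ` LG b = LG y" if b: "b \<in> V" for b
    proof (rule ccontr)
      assume n: "\<not> (\<exists>y\<in>V. \<psi> ` LG b = LG y)"
      then obtain x where x: "x \<in> V" "\<psi> ` LG b = LH x" using layer_image[OF prime psi b] by blast
      show False
      proof (cases "b = b0")
        case True then show False using b0 x LG_ne_LH by metis
      next
        case False
        have "\<psi> ` LG b0 \<inter> \<psi> ` LG b = {}" using img_disj[OF psi b0(1) b] False by metis
        then show False using LG_LH_meet[OF x(1) b0(2)] b0(3) x(2) by auto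
      qed
    qed
    have c2: "\<exists>x\<in>V. \<psi> ` LH a = LH x" if a: "a \<in> V" for a
    proof (rule ccontr)
      assume n: "\<not> (\<exists>x\<in>V. \<psi> ` LH a = LH x)"
      then obtain y where y: "y \<in> V" "\<psi> ` LH a = LG y" using LH_image[OF prime psi a] by blast
      obtain y1 where y1: "y1 \<in> V" "\<psi> ` LG b1 = LG y1" using c1 b12(1) by blast
      obtain y2 where y2: "y2 \<in> V" "\<psi> ` LG b2 = LG y2" using c1 b12(2) by blast
      have "y1 = y" using img_meet[OF a b12(1), of \<psi>] y y1 LG_inj by (metis empty_iff)
      moreover have "y2 = y" using img_meet[OF a b12(2), of \<psi>] y y2 LG_inj by (metis empty_iff)
      ultimately have "\<psi> ` LG b1 = \<psi> ` LG b2" using y1 y2 by simp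
      moreover have "\<psi> ` LG b1 \<inter> \<psi> ` LG b2 = {}" using img_disj[OF psi b12] .
      moreover have "\<psi> (a,b1) \<in> \<psi> ` LG b1" using a b12 by (simp add: LG_def)
      ultimately show False by auto
    qed
    obtain a0 where a0: "a0 \<in> V" using b12 by blast
    have fstE: "fst (\<psi> (a,b)) = fst (\<psi> (a,b0))" if ab: "a \<in> V" "b \<in> V" for a b
    proof -
      obtain x where x: "\<psi> ` LH a = LH x" using c2 ab(1) by blast
      have "\<psi> (a,b) \<in> LH x" "\<psi> (a,b0) \<in> LH x" using x ab b0 by (auto simp: LH_def[of a] intro!: imageI)
      then show ?thesis by (auto simp: LH_def)
    qed
    have sndE: "snd (\<psi> (a,b)) = snd (\<psi> (a0,b))" if ab: "a \<in> V" "b \<in> V" for a b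
    proof -
      obtain y where y: "\<psi> ` LG b = LG y" using c1 ab(2) by blast
      have "\<psi> (a,b) \<in> LG y" "\<psi> (a0,b) \<in> LG y" using y ab a0 by (auto simp: LG_def[of b] intro!: imageI)
      then show ?thesis by (auto simp: LG_def)
    qed
    define \<alpha> where "\<alpha> = (\<lambda>x. if x \<in> V then fst (\<psi> (x,b0)) else x)"
    define \<beta> where "\<beta> = (\<lambda>x. if x \<in> V then snd (\<psi> (a0,x)) else x)"
    have psiab: "\<psi> (a,b) = (\<alpha> a, \<beta> b)" if "a \<in> V" "b \<in> V" for a b
      using fstE[OF that] sndE[OF that] that unfolding \<alpha>_def \<beta>_def by (simp add: prod_eq_iff)
    have inVV: "\<psi> p \<in> V \<times> V" if "p \<in> V \<times> V" for p using aut_in[OF psi] that by (simp add: vertsH)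
    have aV: "\<alpha> a \<in> V" if "a \<in> V" for a using inVV[of "(a,b0)"] that b0 by (auto simp: \<alpha>_def)
    have bV: "\<beta> b \<in> V" if "b \<in> V" for b using inVV[of "(a0,b)"] that a0 by (auto simp: \<beta>_def)
    have injpsi: "\<psi> p = \<psi> q \<Longrightarrow> p \<in> V \<times> V \<Longrightarrow> q \<in> V \<times> V \<Longrightarrow> p = q" for p q
      using aut_H_facts(1)[OF psi] unfolding inj_on_def by blast
    have "\<alpha> \<in> auts G"
    proof -
      have "(\<lambda>x. if x \<in> V then \<alpha> x else x) \<in> auts G"
      proof (rule mk_aut)
        show "\<alpha> ` V \<subseteq> V" using aV by auto
        show "inj_on \<alpha> V"
        proof (rule inj_onI)
          fix u v assume uv: "u \<in> V" "v \<in> V" "\<alpha> u = \<alpha> v"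
          then have "\<psi> (u,b0) = \<psi> (v,b0)" using psiab b0 by simp
          then show "u = v" using injpsi uv b0 by blast
        qed
        fix u v assume uv: "u \<in> V" "v \<in> V"
        have "{u,v} \<in> E \<longleftrightarrow> {(u,b0),(v,b0)} \<in> edges H" using edgeH_G[OF b0(1)] by simp
        also have "\<dots> \<longleftrightarrow> {\<psi> (u,b0), \<psi> (v,b0)} \<in> edges H"
          using aut_edge[OF psi, of "(u,b0)" "(v,b0)"] uv b0 by (simp add: vertsH)
        also have "\<dots> \<longleftrightarrow> {\<alpha> u, \<alpha> v} \<in> E" using psiab uv b0 edgeH_G[OF bV[OF b0(1)]] by simp
        finally show "{u,v} \<in> E \<longleftrightarrow> {\<alpha> u, \<alpha> v} \<in> E" .
      qed
      moreover have "(\<lambda>x. if x \<in> V then \<alpha> x else x) = \<alpha>" unfolding \<alpha>_def by auto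
      ultimately show ?thesis by simp
    qed
    moreover have "\<beta> \<in> auts G"
    proof -
      have "(\<lambda>x. if x \<in> V then \<beta> x else x) \<in> auts G"
      proof (rule mk_aut)
        show "\<beta> ` V \<subseteq> V" using bV by auto
        show "inj_on \<beta> V"
        proof (rule inj_onI)
          fix u v assume uv: "u \<in> V" "v \<in> V" "\<beta> u = \<beta> v"
          then have "\<psi> (a0,u) = \<psi> (a0,v)" using psiab a0 by simp
          then show "u = v" using injpsi uv a0 by blast
        qed
        fix u v assume uv: "u \<in> V" "v \<in> V"
        have "{u,v} \<in> E \<longleftrightarrow> {(a0,u),(a0,v)} \<in> edges H" using edgeH_H[OF a0] by simp
        also have "\<dots> \<longleftrightarrow> {\<psi> (a0,u), \<psi> (a0,v)} \<in> edges H"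
          using aut_edge[OF psi, of "(a0,u)" "(a0,v)"] uv a0 by (simp add: vertsH)
        also have "\<dots> \<longleftrightarrow> {\<beta> u, \<beta> v} \<in> E" using psiab uv a0 edgeH_H[OF aV[OF a0]] by simp
        finally show "{u,v} \<in> E \<longleftrightarrow> {\<beta> u, \<beta> v} \<in> E" .
      qed
      moreover have "(\<lambda>x. if x \<in> V then \<beta> x else x) = \<beta>" unfolding \<beta>_def by auto
      ultimately show ?thesis by simp
    qed
    ultimately show ?thesis using psiab by blast
  next
    case False
    then have c1: "\<exists>x\<in>V. \<psi> ` LG b = LH x" if "b \<in> V" for b
      using layer_image[OF prime psi that] that by blast
    have "\<exists>y\<in>V. \<psi> ` LH a = LG y" if a: "a \<in> V" for a
    proof (rule ccontr)
      assume n: "\<not> (\<exists>y\<in>V. \<psi> ` LH a = LG y)"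
      then obtain x where x: "x \<in> V" "\<psi> ` LH a = LH x" using LH_image[OF prime psi a] by blast
      obtain x1 where x1: "x1 \<in> V" "\<psi> ` LG b1 = LH x1" using c1 b12(1) by blast
      obtain x2 where x2: "x2 \<in> V" "\<psi> ` LG b2 = LH x2" using c1 b12(2) by blast
      have "x1 = x" using img_meet[OF a b12(1), of \<psi>] x x1 LH_inj by (metis empty_iff)
      moreover have "x2 = x" using img_meet[OF a b12(2), of \<psi>] x x2 LH_inj by (metis empty_iff)
      ultimately have "\<psi> ` LG b1 = \<psi> ` LG b2" using x1 x2 by simp
      moreover have "\<psi> ` LG b1 \<inter> \<psi> ` LG b2 = {}" using img_disj[OF psi b12] .
      moreover have "\<psi> (a,b1) \<in> \<psi> ` LG b1" using a b12 by (simp add: LG_def)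
      ultimately show False by auto
    qed
    then show ?thesis by blast
  qed
qed

end

lemma funpow_prod:
  assumes hj: "\<And>x y. x \<in> X \<Longrightarrow> y \<in> Y \<Longrightarrow> h (j x y) = j (f x) (g y)"
    and fX: "f ` X \<subseteq> X" and gY: "g ` Y \<subseteq> Y" and x: "x \<in> X" and y: "y \<in> Y"
  shows "(h ^^ k) (j x y) = j ((f ^^ k) x) ((g ^^ k) y) \<and> (f ^^ k) x \<in> X \<and> (g ^^ k) y \<in> Y"
proof (induction k)
  case 0 then show ?case using x y by simp
next
  case (Suc k)
  then show ?case using hj fX gY by auto
qed

lemma orbit_count_le:
  assumes hj: "\<And>x y. x \<in> X \<Longrightarrow> y \<in> Y \<Longrightarrow> h (j x y) = j (f x) (g y)"
    and fX: "f ` X \<subseteq> X" and gY: "g ` Y \<subseteq> Y" and finX: "finite X" and finY: "finite Y"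
    and oeq: "\<And>x y w. x \<in> X \<Longrightarrow> y \<in> Y \<Longrightarrow> w \<in> orb h (j x y) \<Longrightarrow> orb h w = orb h (j x y)"
  shows "card ((\<lambda>(x,y). orb h (j x y)) ` (X \<times> Y)) \<le> card (orb f ` X) * card Y"
proof -
  define F where "F = (\<lambda>(Q,y). orb h (j (SOME x. x \<in> Q \<and> x \<in> X) y))"
  have sub: "(\<lambda>(x,y). orb h (j x y)) ` (X \<times> Y) \<subseteq> F ` (orb f ` X \<times> Y)"
  proof
    fix t assume "t \<in> (\<lambda>(x,y). orb h (j x y)) ` (X \<times> Y)"
    then obtain x y where xy: "x \<in> X" "y \<in> Y" "t = orb h (j x y)" by auto
    define x' where "x' = (SOME x'. x' \<in> orb f x \<and> x' \<in> X)"
    have "\<exists>x'. x' \<in> orb f x \<and> x' \<in> X" using xy(1) orb_self by metis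
    then have x': "x' \<in> orb f x" "x' \<in> X" unfolding x'_def by (metis (mono_tags, lifting) someI_ex)+
    then obtain k where k: "x' = (f ^^ k) x" unfolding orb_def by auto
    have fp: "(h ^^ k) (j x y) = j x' ((g ^^ k) y)" "(g ^^ k) y \<in> Y"
      using funpow_prod[where h=h and j=j and f=f and g=g and X=X and Y=Y, OF hj fX gY xy(1) xy(2), of k] k by auto
    have "F (orb f x, (g ^^ k) y) = orb h (j x' ((g ^^ k) y))" unfolding F_def x'_def by simp
    also have "\<dots> = orb h ((h ^^ k) (j x y))" using fp by simp
    also have "\<dots> = orb h (j x y)" using oeq[OF xy(1) xy(2) orb_funpow] .
    finally show "t \<in> F ` (orb f ` X \<times> Y)" using xy fp(2)
      by (metis (no_types, lifting) SigmaI imageI)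
  qed
  have fin: "finite (orb f ` X \<times> Y)" using finX finY by simp
  have "card ((\<lambda>(x,y). orb h (j x y)) ` (X \<times> Y)) \<le> card (F ` (orb f ` X \<times> Y))"
    using card_mono[OF finite_imageI[OF fin] sub] .
  also have "\<dots> \<le> card (orb f ` X \<times> Y)" using card_image_le[OF fin] .
  also have "\<dots> = card (orb f ` X) * card Y" by (simp add: card_cartesian_product)
  finally show ?thesis .
qed

lemma orbit_count_eq:
  assumes hj: "\<And>x y. x \<in> X \<Longrightarrow> y \<in> Y \<Longrightarrow> h (j x y) = j (f x) y"
    and fX: "f ` X \<subseteq> X" and inj: "inj_on (\<lambda>(x,y). j x y) (X \<times> Y)"
    and finX: "finite X" and finY: "finite Y"
  shows "card ((\<lambda>(x,y). orb h (j x y)) ` (X \<times> Y)) = card (orb f ` X) * card Y"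
proof -
  have hj': "\<And>x y. x \<in> X \<Longrightarrow> y \<in> Y \<Longrightarrow> h (j x y) = j (f x) (id y)" using hj by simp
  have orbeq: "orb h (j x y) = (\<lambda>x'. j x' y) ` orb f x" if xy: "x \<in> X" "y \<in> Y" for x y
  proof -
    have idY: "id ` Y \<subseteq> Y" by simp
    have "(h ^^ k) (j x y) = j ((f ^^ k) x) y" for k
      using funpow_prod[where h=h and j=j and f=f and g=id and X=X and Y=Y, OF hj' fX idY xy(1) xy(2), of k] by (simp add: id_funpow)
    then show ?thesis unfolding orb_def by auto
  qed
  define \<Phi> where "\<Phi> = (\<lambda>(Q,y). (\<lambda>x'. j x' y) ` Q)"
  have orbX: "Q \<subseteq> X" if "Q \<in> orb f ` X" for Q using that orb_closed[OF fX] by auto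
  have img: "(\<lambda>(x,y). orb h (j x y)) ` (X \<times> Y) = \<Phi> ` (orb f ` X \<times> Y)"
  proof -
    have "(\<lambda>(x,y). orb h (j x y)) ` (X \<times> Y) = (\<lambda>(x,y). \<Phi> (orb f x, y)) ` (X \<times> Y)"
      unfolding \<Phi>_def using orbeq by (intro image_cong) auto
    also have "\<dots> = \<Phi> ` ((\<lambda>(x,y). (orb f x, y)) ` (X \<times> Y))" by (simp add: image_comp case_prod_unfold o_def)
    also have "(\<lambda>(x,y). (orb f x, y)) ` (X \<times> Y) = orb f ` X \<times> Y" by (auto simp: image_iff)
    finally show ?thesis .
  qed
  have injP: "inj_on \<Phi> (orb f ` X \<times> Y)"
  proof (rule inj_onI)
    fix p q assume p: "p \<in> orb f ` X \<times> Y" and q: "q \<in> orb f ` X \<times> Y" and eq: "\<Phi> p = \<Phi> q"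
    obtain Q y where Oy: "p = (Q,y)" by fastforce
    obtain Q' y' where Oy': "q = (Q',y')" by fastforce
    obtain x where x: "x \<in> X" "Q = orb f x" using p Oy by auto
    obtain x' where x': "x' \<in> X" "Q' = orb f x'" using q Oy' by auto
    have y: "y \<in> Y" "y' \<in> Y" using p q Oy Oy' by auto
    have OX: "Q \<subseteq> X" "Q' \<subseteq> X" using orbX p q Oy Oy' by auto
    have "j x y \<in> \<Phi> q" using eq Oy x orb_self unfolding \<Phi>_def by (metis case_prod_conv imageI)
    then obtain x'' where x'': "x'' \<in> Q'" "j x y = j x'' y'" using Oy' unfolding \<Phi>_def by auto
    have "(x, y) = (x'', y')" using inj x(1) y x'' OX by (auto simp: inj_on_def)
    then have yy: "y = y'" by simp
    have injy: "inj_on (\<lambda>x'. j x' y) X" using inj y(1) by (auto simp: inj_on_def)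
    have "(\<lambda>x'. j x' y) ` Q = (\<lambda>x'. j x' y) ` Q'" using eq Oy Oy' yy unfolding \<Phi>_def by simp
    then have "Q = Q'" using inj_on_image_eq_iff[OF injy OX] by simp
    then show "p = q" using Oy Oy' yy by simp
  qed
  have "card ((\<lambda>(x,y). orb h (j x y)) ` (X \<times> Y)) = card (orb f ` X \<times> Y)"
    unfolding img by (rule card_image[OF injP])
  also have "\<dots> = card (orb f ` X) * card Y" by (simp add: card_cartesian_product)
  finally show ?thesis .
qed

lemma orb_const:
  assumes "\<forall>e\<in>Z. c (h e) = c e" "h ` Z \<subseteq> Z" "e \<in> Z" "e' \<in> orb h e"
  shows "c e' = c e"
proof -
  have "c ((h ^^ k) e) = c e \<and> (h ^^ k) e \<in> Z" for k
  proof (induction k)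
    case 0 then show ?case using assms(3) by simp
  next
    case (Suc k)
    then have "h ((h ^^ k) e) \<in> Z" using assms(2) by blast
    moreover have "c (h ((h ^^ k) e)) = c ((h ^^ k) e)" using assms(1) Suc by blast
    ultimately show ?case using Suc by simp
  qed
  then show ?thesis using assms(4) unfolding orb_def by auto
qed

lemma theta'_eq:
  assumes s: "simple_graph K" and M: "M \<ge> 1"
    and up: "\<And>f. f \<in> auts K \<Longrightarrow> f \<noteq> id \<Longrightarrow> edge_cycles K f \<le> M"
    and f0: "f0 \<in> auts K" "f0 \<noteq> id" "edge_cycles K f0 \<ge> M"
  shows "theta' K = M + 1"
  unfolding theta'_def
proof (rule Least_equality)
  have finE: "finite (edges K)" using simple_edges_finite[OF s] .
  show "1 \<le> M + 1 \<and> (\<forall>c. c ` edges K = {1..M + 1} \<longrightarrow> distinguishing K c)"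
  proof (intro conjI allI impI)
    show "1 \<le> M + 1" by simp
    fix c :: "'a set \<Rightarrow> nat" assume c: "c ` edges K = {1..M + 1}"
    show "distinguishing K c" unfolding distinguishing_def
    proof (intro ballI impI)
      fix f assume f: "f \<in> auts K" and pres: "\<forall>e\<in>edges K. c (f ` e) = c e"
      show "f = id"
      proof (rule ccontr)
        assume nid: "f \<noteq> id"
        have hE: "image f ` edges K \<subseteq> edges K" using aut_image_edge[OF s f] by auto
        define g where "g = (\<lambda>Q. c (SOME e. e \<in> Q))"
        have "c ` edges K = g ` (orb (image f) ` edges K)"
        proof (rule set_eqI, rule iffI)
          fix t assume "t \<in> c ` edges K"
          then obtain e where e: "e \<in> edges K" "t = c e" by auto
          have "(SOME e'. e' \<in> orb (image f) e) \<in> orb (image f) e" using orb_self by (metis someI_ex)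
          then have "g (orb (image f) e) = c e" unfolding g_def using orb_const[OF pres hE e(1)] by simp
          then show "t \<in> g ` (orb (image f) ` edges K)" using e by (metis imageI)
        next
          fix t assume "t \<in> g ` (orb (image f) ` edges K)"
          then obtain e where e: "e \<in> edges K" "t = g (orb (image f) e)" by auto
          have "(SOME e'. e' \<in> orb (image f) e) \<in> orb (image f) e" using orb_self by (metis someI_ex)
          then have "g (orb (image f) e) = c e" unfolding g_def using orb_const[OF pres hE e(1)] by simp
          then show "t \<in> c ` edges K" using e by auto
        qed
        then have "card (c ` edges K) \<le> card (orb (image f) ` edges K)"
          using card_image_le finE by (metis finite_imageI)
        also have "\<dots> = edge_cycles K f" by (simp add: edge_cycles_orb)
        also have "\<dots> \<le> M" using up[OF f nid] .
        finally show False using c by simp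
      qed
    qed
  qed
next
  fix k assume k: "1 \<le> k \<and> (\<forall>c. c ` edges K = {1..k} \<longrightarrow> distinguishing K c)"
  show "M + 1 \<le> k"
  proof (rule ccontr)
    assume "\<not> M + 1 \<le> k"
    then have kM: "k \<le> M" by simp
    have finE: "finite (edges K)" using simple_edges_finite[OF s] .
    define Om where "Om = orb (image f0) ` edges K"
    have finO: "finite Om" unfolding Om_def using finE by simp
    have cO: "card Om \<ge> M" using f0(3) unfolding Om_def by (simp add: edge_cycles_orb)
    obtain b where b: "bij_betw b Om {0..<card Om}" using ex_bij_betw_finite_nat[OF finO] by blast
    define s' where "s' = (\<lambda>Q. min (b Q + 1) k)"
    have "s' ` Om = (\<lambda>i. min (i + 1) k) ` {0..<card Om}"
    proof -
      have "s' ` Om = (\<lambda>i. min (i + 1) k) ` (b ` Om)" unfolding s'_def by (simp add: image_comp o_def)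
      then show ?thesis using b by (simp add: bij_betw_def)
    qed
    also have "\<dots> = {1..k}"
    proof
      show "(\<lambda>i. min (i + 1) k) ` {0..<card Om} \<subseteq> {1..k}" using k by auto
      show "{1..k} \<subseteq> (\<lambda>i. min (i + 1) k) ` {0..<card Om}"
      proof
        fix t assume t: "t \<in> {1..k}"
        then have "t = min ((t - 1) + 1) k" "t - 1 \<in> {0..<card Om}" using kM cO by auto
        then show "t \<in> (\<lambda>i. min (i + 1) k) ` {0..<card Om}" by (metis imageI)
      qed
    qed
    finally have sO: "s' ` Om = {1..k}" .
    define c where "c = (\<lambda>e. s' (orb (image f0) e))"
    have cimg: "c ` edges K = {1..k}" unfolding c_def using sO unfolding Om_def by (simp add: image_comp)
    have hbij: "bij_betw (image f0) (edges K) (edges K)" using aut_edges_bij[OF s f0(1)] .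
    have "\<forall>e\<in>edges K. c (f0 ` e) = c e"
    proof
      fix e assume e: "e \<in> edges K"
      have "f0 ` e \<in> orb (image f0) e" using orb_funpow[where h="image f0" and k=1 and x=e] by simp
      then have "orb (image f0) (f0 ` e) = orb (image f0) e" using orb_eq[OF hbij finE e] by simp
      then show "c (f0 ` e) = c e" unfolding c_def by simp
    qed
    then have "\<not> distinguishing K c" using f0(1,2) unfolding distinguishing_def by blast
    then show False using k cimg by blast
  qed
qed


context pg begin

definition j1 :: "'a set \<Rightarrow> 'a \<Rightarrow> ('a \<times> 'a) set" where "j1 e b = (\<lambda>u. (u,b)) ` e"
definition j2 :: "'a \<Rightarrow> 'a set \<Rightarrow> ('a \<times> 'a) set" where "j2 a e = (\<lambda>v. (a,v)) ` e"
definition "E1 = (\<lambda>(e,b). j1 e b) ` (E \<times> V)"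
definition "E2 = (\<lambda>(a,e). j2 a e) ` (V \<times> E)"

lemma j1_pair: "j1 {u,v} b = {(u,b),(v,b)}" by (simp add: j1_def)
lemma j2_pair: "j2 a {u,v} = {(a,u),(a,v)}" by (simp add: j2_def)

lemma edgesH_split: "edges H = E1 \<union> E2"
proof
  show "edges H \<subseteq> E1 \<union> E2"
  proof
    fix e assume e: "e \<in> edges H"
    then obtain p q where pq: "e = {p,q}" using cart_edge_form by blast
    obtain u x v y where p: "p = (u,x)" and q: "q = (v,y)" by fastforce
    have c: "(u = v \<and> u \<in> V \<and> {x, y} \<in> E) \<or> (x = y \<and> x \<in> V \<and> {u, v} \<in> E)"
      using e pq p q cart_edge_iff by metis
    then show "e \<in> E1 \<union> E2"
    proof
      assume a: "u = v \<and> u \<in> V \<and> {x, y} \<in> E"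
      then have "e = j2 u {x,y}" using pq p q by (simp add: j2_pair)
      then show ?thesis using a unfolding E2_def by auto
    next
      assume a: "x = y \<and> x \<in> V \<and> {u, v} \<in> E"
      then have "e = j1 {u,v} x" using pq p q by (simp add: j1_pair)
      then show ?thesis using a unfolding E1_def by auto
    qed
  qed
  show "E1 \<union> E2 \<subseteq> edges H"
  proof
    fix e assume "e \<in> E1 \<union> E2"
    then show "e \<in> edges H"
    proof
      assume "e \<in> E1"
      then obtain e0 b where eb: "e0 \<in> E" "b \<in> V" "e = j1 e0 b" unfolding E1_def by auto
      obtain u v where uv: "e0 = {u,v}" using simple_edge[OF simple eb(1)] by blast
      show ?thesis using eb uv edgeH_G[OF eb(2), of u v] by (simp add: j1_pair)
    next
      assume "e \<in> E2"
      then obtain e0 a where eb: "e0 \<in> E" "a \<in> V" "e = j2 a e0" unfolding E2_def by auto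
      obtain u v where uv: "e0 = {u,v}" using simple_edge[OF simple eb(1)] by blast
      show ?thesis using eb uv edgeH_H[OF eb(2), of u v] by (simp add: j2_pair)
    qed
  qed
qed

lemma E1E2_disj: "E1 \<inter> E2 = {}"
proof (rule ccontr)
  assume "E1 \<inter> E2 \<noteq> {}"
  then obtain e where "e \<in> E1" "e \<in> E2" by blast
  then obtain e0 b where "e0 \<in> E" "e = j1 e0 b" unfolding E1_def by auto
  moreover obtain e1 a where "e1 \<in> E" "e = j2 a e1" using \<open>e \<in> E2\<close> unfolding E2_def by auto
  moreover obtain u v where "e0 = {u,v}" "u \<noteq> v" using simple_edge[OF simple \<open>e0 \<in> E\<close>] by blast
  ultimately have "{(u,b),(v,b)} = j2 a e1" by (simp add: j1_pair)
  then have "(u,b) \<in> j2 a e1" "(v,b) \<in> j2 a e1" by auto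
  then have "u = a" "v = a" by (auto simp: j2_def)
  with \<open>u \<noteq> v\<close> show False by simp
qed

lemma j1_inj: "inj_on (\<lambda>(e,b). j1 e b) (E \<times> V)"
proof (rule inj_onI)
  fix p q assume p: "p \<in> E \<times> V" and q: "q \<in> E \<times> V" and eq: "(\<lambda>(e,b). j1 e b) p = (\<lambda>(e,b). j1 e b) q"
  obtain e b e' b' where pq: "p = (e,b)" "q = (e',b')" by fastforce
  obtain u v where uv: "e = {u,v}" using simple_edge[OF simple, of e] p pq by auto
  have "j1 e b = j1 e' b'" using eq pq by simp
  moreover have "(u,b) \<in> j1 e b" using uv by (simp add: j1_pair)
  ultimately have "(u,b) \<in> j1 e' b'" by simp
  then have bb: "b = b'" by (auto simp: j1_def)
  have "fst ` j1 e b = e" "fst ` j1 e' b' = e'" by (auto simp: j1_def image_image)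
  then have "e = e'" using eq pq by simp
  then show "p = q" using pq bb by simp
qed

lemma j2_inj: "inj_on (\<lambda>(a,e). j2 a e) (V \<times> E)"
proof (rule inj_onI)
  fix p q assume p: "p \<in> V \<times> E" and q: "q \<in> V \<times> E" and eq: "(\<lambda>(a,e). j2 a e) p = (\<lambda>(a,e). j2 a e) q"
  obtain e b e' b' where pq: "p = (b,e)" "q = (b',e')" by fastforce
  obtain u v where uv: "e = {u,v}" using simple_edge[OF simple, of e] p pq by auto
  have "j2 b e = j2 b' e'" using eq pq by simp
  moreover have "(b,u) \<in> j2 b e" using uv by (simp add: j2_pair)
  ultimately have "(b,u) \<in> j2 b' e'" by simp
  then have bb: "b = b'" by (auto simp: j2_def)
  have "snd ` j2 b e = e" "snd ` j2 b' e' = e'" by (auto simp: j2_def image_image)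
  then have "e = e'" using eq pq by simp
  then show "p = q" using pq bb by simp
qed

lemma card_E1: "card E1 = card E * card V"
  unfolding E1_def using card_image[OF j1_inj] by (simp add: card_cartesian_product)

lemma fin_EH: "finite (edges H)" using simple_edges_finite[OF simpleH] .

lemma oeqH: "\<psi> \<in> auts H \<Longrightarrow> x \<in> edges H \<Longrightarrow> w \<in> orb (image \<psi>) x \<Longrightarrow> orb (image \<psi>) w = orb (image \<psi>) x"
  using orb_eq[OF aut_edges_bij[OF simpleH] fin_EH] by blast

lemma cyclesH_split: "edge_cycles H \<psi> \<le> card (orb (image \<psi>) ` E1) + card (orb (image \<psi>) ` E2)"
proof -
  have "edge_cycles H \<psi> = card (orb (image \<psi>) ` E1 \<union> orb (image \<psi>) ` E2)"
    by (simp add: edge_cycles_orb edgesH_split image_Un)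
  also have "\<dots> \<le> card (orb (image \<psi>) ` E1) + card (orb (image \<psi>) ` E2)" by (rule card_Un_le)
  finally show ?thesis .
qed

lemma orbE1: "orb h ` E1 = (\<lambda>(e,b). orb h (j1 e b)) ` (E \<times> V)"
  unfolding E1_def by (auto simp: image_iff)
lemma orbE1': "orb h ` E1 = (\<lambda>(b,e). orb h (j1 e b)) ` (V \<times> E)"
  unfolding E1_def by (auto simp: image_iff)
lemma orbE2: "orb h ` E2 = (\<lambda>(a,e). orb h (j2 a e)) ` (V \<times> E)"
  unfolding E2_def by (auto simp: image_iff)
lemma orbE2': "orb h ` E2 = (\<lambda>(e,a). orb h (j2 a e)) ` (E \<times> V)"
  unfolding E2_def by (auto simp: image_iff)

lemma E1_sub: "E1 \<subseteq> edges H" and E2_sub: "E2 \<subseteq> edges H" using edgesH_split by auto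

lemma aut_imgE: "\<alpha> \<in> auts G \<Longrightarrow> image \<alpha> ` E \<subseteq> E" using aut_image_edge[OF simple] by auto
lemma aut_imgV: "\<alpha> \<in> auts G \<Longrightarrow> \<alpha> ` V \<subseteq> V" by (simp add: aut_surj)

lemma prod_j1:
  assumes "\<forall>a\<in>V. \<forall>b\<in>V. \<psi> (a,b) = (\<alpha> a, \<beta> b)" "e \<in> E" "b \<in> V"
  shows "\<psi> ` j1 e b = j1 (\<alpha> ` e) (\<beta> b)"
proof -
  have "e \<subseteq> V" using simple_edge_sub[OF simple assms(2)] .
  then show ?thesis using assms(1,3) unfolding j1_def image_image by (intro image_cong) auto
qed

lemma prod_j2:
  assumes "\<forall>a\<in>V. \<forall>b\<in>V. \<psi> (a,b) = (\<alpha> a, \<beta> b)" "e \<in> E" "a \<in> V"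
  shows "\<psi> ` j2 a e = j2 (\<alpha> a) (\<beta> ` e)"
proof -
  have "e \<subseteq> V" using simple_edge_sub[OF simple assms(2)] .
  then show ?thesis using assms(1,3) unfolding j2_def image_image by (intro image_cong) auto
qed

lemma j1_in: "e \<in> E \<Longrightarrow> b \<in> V \<Longrightarrow> j1 e b \<in> edges H" using E1_sub unfolding E1_def by auto
lemma j2_in: "e \<in> E \<Longrightarrow> a \<in> V \<Longrightarrow> j2 a e \<in> edges H" using E2_sub unfolding E2_def by auto

definition "val f = edge_cycles G f * card V + vertex_cycles G f * card E"

lemma prod_bound_alpha:
  assumes psi: "\<psi> \<in> auts H" and al: "\<alpha> \<in> auts G" and be: "\<beta> \<in> auts G"
    and pf: "\<forall>a\<in>V. \<forall>b\<in>V. \<psi> (a,b) = (\<alpha> a, \<beta> b)"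
  shows "edge_cycles H \<psi> \<le> val \<alpha>"
proof -
  have b1: "card (orb (image \<psi>) ` E1) \<le> card (orb (image \<alpha>) ` E) * card V"
    unfolding orbE1
    by (rule orbit_count_le[where h="image \<psi>" and j=j1 and f="image \<alpha>" and g=\<beta> and X=E and Y=V])
       (auto simp: prod_j1[OF pf] aut_imgE[OF al] aut_imgV[OF be] finE finV intro!: oeqH[OF psi] j1_in)
  have b2: "card (orb (image \<psi>) ` E2) \<le> card (orb \<alpha> ` V) * card E"
    unfolding orbE2
    by (rule orbit_count_le[where h="image \<psi>" and j=j2 and f=\<alpha> and g="image \<beta>" and X=V and Y=E])
       (auto simp: prod_j2[OF pf] aut_imgE[OF be] aut_imgV[OF al] finE finV intro!: oeqH[OF psi] j2_in)
  show ?thesis using cyclesH_split[of \<psi>] b1 b2 unfolding val_def edge_cycles_orb vertex_cycles_orb by simp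
qed

lemma prod_bound_beta:
  assumes psi: "\<psi> \<in> auts H" and al: "\<alpha> \<in> auts G" and be: "\<beta> \<in> auts G"
    and pf: "\<forall>a\<in>V. \<forall>b\<in>V. \<psi> (a,b) = (\<alpha> a, \<beta> b)"
  shows "edge_cycles H \<psi> \<le> val \<beta>"
proof -
  have b1: "card (orb (image \<psi>) ` E1) \<le> card (orb \<beta> ` V) * card E"
    unfolding orbE1'
    by (rule orbit_count_le[where h="image \<psi>" and j="\<lambda>b e. j1 e b" and f=\<beta> and g="image \<alpha>" and X=V and Y=E])
       (auto simp: prod_j1[OF pf] aut_imgE[OF al] aut_imgV[OF be] finE finV intro!: oeqH[OF psi] j1_in)
  have b2: "card (orb (image \<psi>) ` E2) \<le> card (orb (image \<beta>) ` E) * card V"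
    unfolding orbE2'
    by (rule orbit_count_le[where h="image \<psi>" and j="\<lambda>e a. j2 a e" and f="image \<beta>" and g=\<alpha> and X=E and Y=V])
       (auto simp: prod_j2[OF pf] aut_imgE[OF be] aut_imgV[OF al] finE finV intro!: oeqH[OF psi] j2_in)
  show ?thesis using cyclesH_split[of \<psi>] b1 b2 unfolding val_def edge_cycles_orb vertex_cycles_orb by simp
qed

end

context pg begin

definition prodaut :: "('a \<Rightarrow> 'a) \<Rightarrow> ('a \<Rightarrow> 'a) \<Rightarrow> 'a \<times> 'a \<Rightarrow> 'a \<times> 'a" where
  "prodaut \<alpha> \<beta> p = (if p \<in> V \<times> V then (\<alpha> (fst p), \<beta> (snd p)) else p)"

lemma prodaut_aut:
  assumes al: "\<alpha> \<in> auts G" and be: "\<beta> \<in> auts G"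
  shows "prodaut \<alpha> \<beta> \<in> auts H"
  unfolding auts_def mem_Collect_eq
proof (intro conjI ballI allI impI)
  have ia: "inj_on \<alpha> V" using aut_inj[OF al] .
  have ib: "inj_on \<beta> V" using aut_inj[OF be] .
  have sa: "\<alpha> ` V = V" using aut_surj[OF al] .
  have sb: "\<beta> ` V = V" using aut_surj[OF be] .
  have "inj_on (prodaut \<alpha> \<beta>) (V \<times> V)"
    using ia ib unfolding inj_on_def prodaut_def by auto
  moreover have "prodaut \<alpha> \<beta> ` (V \<times> V) = V \<times> V"
  proof
    show "prodaut \<alpha> \<beta> ` (V \<times> V) \<subseteq> V \<times> V" using sa sb unfolding prodaut_def by auto
    show "V \<times> V \<subseteq> prodaut \<alpha> \<beta> ` (V \<times> V)"
    proof
      fix p assume p: "p \<in> V \<times> V"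
      obtain x where x: "x \<in> V" "fst p = \<alpha> x" using p sa by (metis SigmaE fst_conv imageE)
      obtain y where y: "y \<in> V" "snd p = \<beta> y" using p sb by (metis SigmaE snd_conv imageE)
      have "prodaut \<alpha> \<beta> (x,y) = p" using x y unfolding prodaut_def by (simp add: prod_eq_iff)
      moreover have "(x,y) \<in> V \<times> V" using x y by simp
      ultimately show "p \<in> prodaut \<alpha> \<beta> ` (V \<times> V)" by (metis imageI)
    qed
  qed
  ultimately show "bij_betw (prodaut \<alpha> \<beta>) (verts H) (verts H)" by (simp add: bij_betw_def vertsH)
  fix p q assume pq: "p \<in> verts H" "q \<in> verts H"
  obtain a b c d where abcd: "p = (a,b)" "q = (c,d)" by fastforce
  have V: "a \<in> V" "b \<in> V" "c \<in> V" "d \<in> V" using pq abcd by (auto simp: vertsH)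
  have im: "prodaut \<alpha> \<beta> p = (\<alpha> a, \<beta> b)" "prodaut \<alpha> \<beta> q = (\<alpha> c, \<beta> d)"
    using V abcd by (auto simp: prodaut_def)
  have e1: "\<alpha> a = \<alpha> c \<longleftrightarrow> a = c" using inj_on_eq_iff[OF ia V(1) V(3)] .
  have e2: "\<beta> b = \<beta> d \<longleftrightarrow> b = d" using inj_on_eq_iff[OF ib V(2) V(4)] .
  have e3: "{\<alpha> a, \<alpha> c} \<in> E \<longleftrightarrow> {a, c} \<in> E" using aut_edge[OF al V(1) V(3)] .
  have e4: "{\<beta> b, \<beta> d} \<in> E \<longleftrightarrow> {b, d} \<in> E" using aut_edge[OF be V(2) V(4)] .
  have "{p, q} \<in> edges H \<longleftrightarrow> (a = c \<and> a \<in> V \<and> {b, d} \<in> E) \<or> (b = d \<and> b \<in> V \<and> {a, c} \<in> E)"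
    using abcd cart_edge_iff[of a b c d G G] by simp
  also have "\<dots> \<longleftrightarrow> (\<alpha> a = \<alpha> c \<and> \<alpha> a \<in> V \<and> {\<beta> b, \<beta> d} \<in> E) \<or> (\<beta> b = \<beta> d \<and> \<beta> b \<in> V \<and> {\<alpha> a, \<alpha> c} \<in> E)"
    using e1 e2 e3 e4 V aut_in[OF al] aut_in[OF be] by auto
  also have "\<dots> \<longleftrightarrow> {prodaut \<alpha> \<beta> p, prodaut \<alpha> \<beta> q} \<in> edges H"
    using im cart_edge_iff[of "\<alpha> a" "\<beta> b" "\<alpha> c" "\<beta> d" G G] by simp
  finally show "{p, q} \<in> edges H \<longleftrightarrow> {prodaut \<alpha> \<beta> p, prodaut \<alpha> \<beta> q} \<in> edges H" .
next
  fix x assume "x \<notin> verts H" then show "prodaut \<alpha> \<beta> x = x" by (simp add: prodaut_def vertsH)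
qed

lemma prodaut_form: "\<forall>a\<in>V. \<forall>b\<in>V. prodaut \<alpha> \<beta> (a,b) = (\<alpha> a, \<beta> b)"
  by (simp add: prodaut_def)

lemma witness_count:
  assumes be: "\<beta> \<in> auts G"
  shows "edge_cycles H (prodaut \<beta> id) = val \<beta>"
proof -
  define h where "h = image (prodaut \<beta> id)"
  have pf: "\<forall>a\<in>V. \<forall>b\<in>V. prodaut \<beta> id (a,b) = (\<beta> a, id b)" by (rule prodaut_form)
  have h1: "h (j1 e b) = j1 (image \<beta> e) b" if "e \<in> E" "b \<in> V" for e b
    using prod_j1[OF pf that] unfolding h_def by (simp add: id_def)
  have h2: "h (j2 a e) = j2 (\<beta> a) e" if "a \<in> V" "e \<in> E" for a e
    using prod_j2[OF pf that(2) that(1)] unfolding h_def by (simp add: id_def)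
  have c1: "card (orb h ` E1) = card (orb (image \<beta>) ` E) * card V"
    unfolding orbE1
    by (rule orbit_count_eq[where h=h and j=j1 and f="image \<beta>" and X=E and Y=V])
       (auto simp: h1 aut_imgE[OF be] j1_inj finE finV)
  have c2: "card (orb h ` E2) = card (orb \<beta> ` V) * card E"
    unfolding orbE2
    by (rule orbit_count_eq[where h=h and j=j2 and f=\<beta> and X=V and Y=E])
       (auto simp: h2 aut_imgV[OF be] j2_inj finE finV)
  have cl1: "h ` E1 \<subseteq> E1"
  proof
    fix x assume "x \<in> h ` E1"
    then obtain e b where "e \<in> E" "b \<in> V" "x = h (j1 e b)" unfolding E1_def by auto
    then show "x \<in> E1" using h1 aut_imgE[OF be] unfolding E1_def by auto
  qed
  have cl2: "h ` E2 \<subseteq> E2"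
  proof
    fix x assume "x \<in> h ` E2"
    then obtain e a where "e \<in> E" "a \<in> V" "x = h (j2 a e)" unfolding E2_def by auto
    then show "x \<in> E2" using h2 aut_imgV[OF be] unfolding E2_def by auto
  qed
  have disj: "orb h ` E1 \<inter> orb h ` E2 = {}"
  proof (rule ccontr)
    assume "orb h ` E1 \<inter> orb h ` E2 \<noteq> {}"
    then obtain x1 x2 where x: "x1 \<in> E1" "x2 \<in> E2" "orb h x1 = orb h x2" by auto
    have "x1 \<in> orb h x2" using x(3) orb_self[of x1 h] by simp
    then have "x1 \<in> E2" using orb_closed[OF cl2 x(2)] by auto
    then show False using x(1) E1E2_disj by auto
  qed
  have fin1: "finite (orb h ` E1)" and fin2: "finite (orb h ` E2)"
    using finite_subset[OF E1_sub fin_EH] finite_subset[OF E2_sub fin_EH] by simp_all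
  have "edge_cycles H (prodaut \<beta> id) = card (orb h ` E1 \<union> orb h ` E2)"
    unfolding h_def by (simp add: edge_cycles_orb edgesH_split image_Un)
  also have "\<dots> = card (orb h ` E1) + card (orb h ` E2)" using card_Un_disjoint[OF fin1 fin2 disj] .
  finally show ?thesis using c1 c2 unfolding val_def edge_cycles_orb vertex_cycles_orb by simp
qed

lemma tau_j1: "e \<in> E \<Longrightarrow> b \<in> V \<Longrightarrow> tau ` j1 e b = j2 b e"
  using simple_edge_sub[OF simple, of e] unfolding j1_def j2_def image_image
  by (intro image_cong) (auto simp: tau_def)
lemma tau_j2: "e \<in> E \<Longrightarrow> a \<in> V \<Longrightarrow> tau ` j2 a e = j1 e a"
  using simple_edge_sub[OF simple, of e] unfolding j1_def j2_def image_image
  by (intro image_cong) (auto simp: tau_def)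

lemma tau_count: "edge_cycles H tau \<ge> card E * card V"
proof -
  define h where "h = image tau"
  have hh: "h (h x) = x \<and> h x \<in> E2" if xE: "x \<in> E1" for x
  proof -
    obtain e b where "e \<in> E" "b \<in> V" "x = j1 e b" using xE unfolding E1_def by auto
    then show ?thesis unfolding h_def using tau_j1 tau_j2 unfolding E2_def by auto
  qed
  have sub: "orb h x \<subseteq> {x, h x}" if "x \<in> E1" for x
  proof -
    have "(h ^^ k) x \<in> {x, h x}" for k
      by (induction k) (use hh[OF that] in auto)
    then show ?thesis unfolding orb_def by auto
  qed
  have inj: "inj_on (orb h) E1"
  proof (rule inj_onI)
    fix x x' assume x: "x \<in> E1" "x' \<in> E1" "orb h x = orb h x'"
    have "x' \<in> {x, h x}" using sub[OF x(1)] x(3) orb_self[of x' h] by auto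
    moreover have "h x \<noteq> x'" using hh[OF x(1)] x(2) E1E2_disj by auto
    ultimately show "x = x'" by auto
  qed
  have "card E * card V = card E1" using card_E1 by simp
  also have "\<dots> = card (orb h ` E1)" using card_image[OF inj] by simp
  also have "\<dots> \<le> card (orb h ` edges H)"
    using E1_sub fin_EH by (intro card_mono) auto
  finally show ?thesis unfolding h_def by (simp add: edge_cycles_orb)
qed

lemma swap_bound:
  assumes psi: "\<psi> \<in> auts H" and sw: "\<forall>a\<in>V. \<exists>y\<in>V. \<psi> ` LH a = LG y"
  shows "edge_cycles H \<psi> \<le> card E * card V"
proof -
  define h where "h = image \<psi>"
  have toE1: "h x \<in> E1" if x: "x \<in> E2" for x
  proof -
    obtain a e where ae: "a \<in> V" "e \<in> E" "x = j2 a e" using x unfolding E2_def by auto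
    obtain y where y: "\<psi> ` LH a = LG y" using sw ae(1) by blast
    have "x \<subseteq> LH a" using ae simple_edge_sub[OF simple ae(2)] unfolding j2_def LH_def by auto
    then have hsub: "h x \<subseteq> LG y" using y unfolding h_def by auto
    have "h x \<in> edges H" unfolding h_def using aut_image_edge[OF simpleH psi] x E2_sub by auto
    then have "h x \<in> E1 \<or> h x \<in> E2" using edgesH_split by auto
    moreover have "h x \<notin> E2"
    proof
      assume "h x \<in> E2"
      then obtain a' e' where ae': "a' \<in> V" "e' \<in> E" "h x = j2 a' e'" unfolding E2_def by auto
      obtain u v where uv: "e' = {u,v}" "u \<noteq> v" using simple_edge[OF simple ae'(2)] by blast
      have "(a',u) \<in> LG y" "(a',v) \<in> LG y" using hsub ae'(3) uv by (auto simp: j2_pair)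
      then show False using uv by (auto simp: LG_def)
    qed
    ultimately show ?thesis by simp
  qed
  have "orb h ` edges H \<subseteq> orb h ` E1"
  proof
    fix t assume "t \<in> orb h ` edges H"
    then obtain x where x: "x \<in> edges H" "t = orb h x" by auto
    show "t \<in> orb h ` E1"
    proof (cases "x \<in> E1")
      case True then show ?thesis using x by auto
    next
      case False
      then have x2: "x \<in> E2" using x edgesH_split by auto
      have "h x \<in> orb h x" using orb_funpow[where h=h and k=1 and x=x] by simp
      then have "orb h (h x) = orb h x" using oeqH[OF psi x(1)] unfolding h_def by simp
      then show ?thesis using toE1[OF x2] x by (metis imageI)
    qed
  qed
  then have "card (orb h ` edges H) \<le> card (orb h ` E1)"
    using finite_subset[OF E1_sub fin_EH] by (intro card_mono) auto
  also have "\<dots> \<le> card E1" using fin_EH E1_sub finite_subset card_image_le by metis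
  also have "\<dots> = card E * card V" using card_E1 .
  finally show ?thesis unfolding h_def by (simp add: edge_cycles_orb)
qed

end

lemma cycles_le:
  assumes "simple_graph G"
  shows "edge_cycles G f \<le> card (edges G)" "vertex_cycles G f \<le> card (verts G)"
  unfolding edge_cycles_orb vertex_cycles_orb
  using card_image_le[OF simple_edges_finite[OF assms]] card_image_le[OF simple_finite[OF assms]] by auto

theorem mainTheorem10:
  fixes G :: "'a graph"
  assumes "simple_graph G" and "connected_graph G" and "cart_prime G"
    and "card (verts G) \<ge> 2"
  shows "theta' (cart_prod G G) =
     max (card (verts G) * card (edges G))
         (if auts G = {id} then 0
          else Max {edge_cycles G f * card (verts G) + vertex_cycles G f * card (edges G)
                    | f. f \<in> auts G - {id}}) + 1"
proof -
  interpret pg G using assms(1,2,4) by unfold_locales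
  define S where "S = {edge_cycles G f * card V + vertex_cycles G f * card E | f. f \<in> auts G - {id}}"
  define R where "R = (if auts G = {id} then 0 else Max S)"
  define M where "M = max (card V * card E) R"
  have S_alt: "S = val ` (auts G - {id})" unfolding S_def val_def by auto
  have finS: "finite S"
  proof -
    have "S \<subseteq> {..card E * card V + card V * card E}"
    proof
      fix t assume "t \<in> S"
      then obtain f where t: "t = val f" using S_alt by auto
      have "edge_cycles G f * card V \<le> card E * card V" using cycles_le(1)[OF simple, of f] by (rule mult_right_mono) simp
      moreover have "vertex_cycles G f * card E \<le> card V * card E" using cycles_le(2)[OF simple, of f] by (rule mult_right_mono) simp
      ultimately have "val f \<le> card E * card V + card V * card E" unfolding val_def by (rule add_mono)
      then show "t \<in> {..card E * card V + card V * card E}" unfolding t by simp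
    qed
    then show ?thesis using finite_subset by blast
  qed
  have valle: "val f \<le> R" if f: "f \<in> auts G" "f \<noteq> id" for f
  proof -
    have "auts G \<noteq> {id}" using f by auto
    moreover have "val f \<in> S" using S_alt f by auto
    ultimately show ?thesis unfolding R_def using Max_ge[OF finS] by simp
  qed
  have Rwit: "\<exists>\<beta>. \<beta> \<in> auts G \<and> \<beta> \<noteq> id \<and> val \<beta> = R" if "R > card V * card E"
  proof -
    have ne: "auts G \<noteq> {id}" using that unfolding R_def by (auto split: if_splits)
    then obtain f where "f \<in> auts G" "f \<noteq> id" using id_aut by blast
    then have "S \<noteq> {}" using S_alt by auto
    then have "R \<in> S" unfolding R_def using ne Max_in[OF finS] by simp
    then show ?thesis using S_alt by auto
  qed
  obtain b1 b2 where b12: "b1 \<in> V" "b2 \<in> V" "b1 \<noteq> b2" by (rule two_elems)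
  have mpos: "card E \<ge> 1"
  proof -
    obtain k where k: "(adj G ^^ k) b1 b2" using connG b12 by blast
    then obtain k' where "k = Suc k'" using b12(3) by (cases k) auto
    then obtain y where "adj G y b2" using k by (metis relpowp_Suc_E)
    then have "E \<noteq> {}" unfolding adj_def by auto
    then show ?thesis using finE by (simp add: Suc_leI card_gt_0_iff)
  qed
  have M1: "M \<ge> 1" unfolding M_def using mpos two by (simp add: le_max_iff_disj)
  have up: "edge_cycles H \<psi> \<le> M" if psi: "\<psi> \<in> auts H" "\<psi> \<noteq> id" for \<psi>
  proof -
    from classify[OF assms(3) psi(1)] show ?thesis
    proof
      assume "\<exists>\<alpha> \<beta>. \<alpha> \<in> auts G \<and> \<beta> \<in> auts G \<and> (\<forall>a\<in>V. \<forall>b\<in>V. \<psi> (a,b) = (\<alpha> a, \<beta> b))"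
      then obtain \<alpha> \<beta> where ab: "\<alpha> \<in> auts G" "\<beta> \<in> auts G" "\<forall>a\<in>V. \<forall>b\<in>V. \<psi> (a,b) = (\<alpha> a, \<beta> b)" by blast
      show ?thesis
      proof (cases "\<alpha> = id")
        case False
        then show ?thesis using prod_bound_alpha[OF psi(1) ab] valle[OF ab(1)] unfolding M_def by simp
      next
        case True
        show ?thesis
        proof (cases "\<beta> = id")
          case False
          then show ?thesis using prod_bound_beta[OF psi(1) ab] valle[OF ab(2)] unfolding M_def by simp
        next
          case bid: True
          have "\<psi> = id"
          proof
            fix p show "\<psi> p = id p"
            proof (cases "p \<in> V \<times> V")
              case True
              then show ?thesis using ab(3) \<open>\<alpha> = id\<close> bid by (cases p) auto
            next
              case False
              then show ?thesis using aut_out[OF psi(1)] by (simp add: vertsH)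
            qed
          qed
          then show ?thesis using psi(2) by simp
        qed
      qed
    next
      assume "\<forall>a\<in>V. \<exists>y\<in>V. \<psi> ` LH a = LG y"
      then have "edge_cycles H \<psi> \<le> card E * card V" by (rule swap_bound[OF psi(1)])
      then show ?thesis unfolding M_def by (simp add: mult.commute)
    qed
  qed
  have wit: "\<exists>f0. f0 \<in> auts H \<and> f0 \<noteq> id \<and> edge_cycles H f0 \<ge> M"
  proof (cases "R \<le> card V * card E")
    case True
    have "tau (b1,b2) = (b2,b1)" using b12 by (simp add: tau_def)
    then have "tau \<noteq> id" using b12 by (metis id_apply prod.inject)
    moreover have "edge_cycles H tau \<ge> M" using tau_count True unfolding M_def by (simp add: mult.commute)
    ultimately show ?thesis using tau_aut by blast
  next
    case False
    then obtain \<beta> where be: "\<beta> \<in> auts G" "\<beta> \<noteq> id" "val \<beta> = R" using Rwit by auto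
    obtain x where x: "\<beta> x \<noteq> x" using be(2) by (metis eq_id_iff)
    have xV: "x \<in> V" using x aut_out[OF be(1)] by blast
    have "prodaut \<beta> id (x,b1) = (\<beta> x, b1)" using xV b12 by (simp add: prodaut_def)
    then have "prodaut \<beta> id \<noteq> id" using x by (metis id_apply prod.inject)
    moreover have "prodaut \<beta> id \<in> auts H" using prodaut_aut[OF be(1) id_aut] .
    moreover have "edge_cycles H (prodaut \<beta> id) \<ge> M" using witness_count[OF be(1)] be(3) False unfolding M_def by simp
    ultimately show ?thesis by blast
  qed
  then obtain f0 where f0: "f0 \<in> auts H" "f0 \<noteq> id" "edge_cycles H f0 \<ge> M" by blast
  have "theta' H = M + 1" using theta'_eq[OF simpleH M1 up f0] by blast
  then show ?thesis unfolding M_def R_def S_def by simp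
qed

end
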